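(* Let $0\le p_c\le p_d\le 1$. For $\delta_1,\delta_2\in[0,1]$ let $R_{sum}(\delta_1,\delta_2)$ be the Han–Kobayashi sum-rate with time-sharing defined in the context. Then $$\max_{\delta_1,\delta_2\in[0,1]} R_{sum}(\delta_1,\delta_2)=\begin{cases}2p_d(1-p_c) & \text{if } p_c\le \frac{p_d}{1+p_d},\\ p_d+p_c-p_dp_c+\frac{p_d-p_c}{2}C_\delta^* & \text{if } \frac{p_d}{1+p_d}<p_c\le p_d,\end{cases}$$ where $C_\delta^*=\frac{p_dp_c-(p_d-p_c)}{p_dp_c-\frac{p_d-p_c}{2}}$.
   Context: Channel (single-letter): $Y_1=G_{11}X_1\oplus G_{21}X_2$, $Y_2=G_{22}X_2\oplus G_{12}X_1$ over $\mathbb{F}_2$, with $G_{11},G_{22}\sim\mathcal{B}(p_d)$, $G_{12},G_{21}\sim\mathcal{B}(p_c)$ mutually independent and independent of the inputs; $\mathcal{B}(p)$ is Bernoulli with $\Pr(1)=p$. Scheme: $Q$ is uniform on $\{1,2\}$ (a time-sharing variable known to all). Given $Q$, the variables $X_{1c},X_{1p},X_{2c},X_{2p}$ are conditionally independent with: if $Q=1$, $X_{1c}\sim\mathcal{B}(\delta_1/2)$, $X_{1p}\sim\mathcal{B}(1-\frac{1}{2-\delta_1})$, $X_{2c}\sim\mathcal{B}(\delta_2/2)$, $X_{2p}\sim\mathcal{B}(1-\frac{1}{2-\delta_2})$; if $Q=2$, the roles of $\delta_1,\delta_2$ are swapped. The inputs are $X_i=\max(X_{ic},X_{ip})$ (so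 $X_i\sim\mathcal{B}(1/2)$). Let $\mathbf{G}_1=(G_{11},G_{21})$, $\mathbf{G}_2=(G_{22},G_{12})$. Define $R_{sum}(\delta_1,\delta_2)$ as the maximum of $R_{1c}+R_{1p}+R_{2c}+R_{2p}$ over nonnegative rates satisfying, for $i=1,2$: $R_{ip}\le I(X_{ip};Y_i\mid X_{1c},X_{2c},Q,\mathbf{G}_i)$, and for each $j=1,2$: $R_{1c}+R_{2c}\le I(X_{1c},X_{2c};Y_j\mid Q,\mathbf{G}_j)$, $R_{1c}\le I(X_{1c};Y_j\mid X_{2c},Q,\mathbf{G}_j)$, $R_{2c}\le I(X_{2c};Y_j\mid X_{1c},Q,\mathbf{G}_j)$ (i.e. both common messages are decoded at both receivers and each private message is decoded last at its own receiver). *)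

theory Defs
  imports Complex_Main
begin

definition pr :: "'w set \<Rightarrow> ('w \<Rightarrow> real) \<Rightarrow> ('w \<Rightarrow> bool) \<Rightarrow> real" where
  "pr Om P E = (\<Sum>w\<in>Om. if E w then P w else 0)"

text \<open>Conditional mutual information I(A;B|C) in bits (base-2 logarithm):
  sum over outcomes of p(a,b,c) log [ p(a,b,c) p(c) / (p(a,c) p(b,c)) ].
  Outcomes of mass zero contribute zero.\<close>

definition cmi :: "'w set \<Rightarrow> ('w \<Rightarrow> real) \<Rightarrow> ('w \<Rightarrow> 'a) \<Rightarrow> ('w \<Rightarrow> 'b) \<Rightarrow> ('w \<Rightarrow> 'c) \<Rightarrow> real" where
  "cmi Om P A B C =
     (\<Sum>w\<in>Om. P w *
        log 2 ((pr Om P (\<lambda>v. A v = A w \<and> B v = B w \<and> C v = C w) * pr Om P (\<lambda>v. C v = C w))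
             / (pr Om P (\<lambda>v. A v = A w \<and> C v = C w) * pr Om P (\<lambda>v. B v = B w \<and> C v = C w))))"

text \<open>Bernoulli(p) mass function, Pr(1) = p (True encodes 1).\<close>

definition bern :: "real \<Rightarrow> bool \<Rightarrow> real" where
  "bern p b = (if b then p else 1 - p)"

text \<open>Outcome: (Q, X1c, X1p, X2c, X2p, G11, G21, G22, G12), Q \<in> {1,2}.\<close>

type_synonym outcome = "nat \<times> bool \<times> bool \<times> bool \<times> bool \<times> bool \<times> bool \<times> bool \<times> bool"

definition Omega :: "outcome set" where
  "Omega = {1::nat, 2} \<times> UNIV"

definition oQ :: "outcome \<Rightarrow> nat" where "oQ w = fst w"
definition oX1c :: "outcome \<Rightarrow> bool" where "oX1c w = fst (snd w)"
definition oX1p :: "outcome \<Rightarrow> bool" where "oX1p w = fst (snd (snd w))"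
definition oX2c :: "outcome \<Rightarrow> bool" where "oX2c w = fst (snd (snd (snd w)))"
definition oX2p :: "outcome \<Rightarrow> bool" where "oX2p w = fst (snd (snd (snd (snd w))))"
definition oG11 :: "outcome \<Rightarrow> bool" where "oG11 w = fst (snd (snd (snd (snd (snd w)))))"
definition oG21 :: "outcome \<Rightarrow> bool" where "oG21 w = fst (snd (snd (snd (snd (snd (snd w))))))"
definition oG22 :: "outcome \<Rightarrow> bool" where "oG22 w = fst (snd (snd (snd (snd (snd (snd (snd w)))))))"
definition oG12 :: "outcome \<Rightarrow> bool" where "oG12 w = snd (snd (snd (snd (snd (snd (snd (snd w)))))))"

text \<open>Inputs X_i = max(X_ic, X_ip) (= OR over F_2) and outputs over F_2 (AND = product, XOR = sum).\<close>

definition oX1 :: "outcome \<Rightarrow> bool" where "oX1 w = (oX1c w \<or> oX1p w)"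
definition oX2 :: "outcome \<Rightarrow> bool" where "oX2 w = (oX2c w \<or> oX2p w)"
definition oY1 :: "outcome \<Rightarrow> bool" where "oY1 w = ((oG11 w \<and> oX1 w) \<noteq> (oG21 w \<and> oX2 w))"
definition oY2 :: "outcome \<Rightarrow> bool" where "oY2 w = ((oG22 w \<and> oX2 w) \<noteq> (oG12 w \<and> oX1 w))"

definition oGv1 :: "outcome \<Rightarrow> bool \<times> bool" where "oGv1 w = (oG11 w, oG21 w)"
definition oGv2 :: "outcome \<Rightarrow> bool \<times> bool" where "oGv2 w = (oG22 w, oG12 w)"

definition joint :: "real \<Rightarrow> real \<Rightarrow> real \<Rightarrow> real \<Rightarrow> outcome \<Rightarrow> real" where
  "joint pd pc d1 d2 w =
     (let a = (if oQ w = 1 then d1 else d2); b = (if oQ w = 1 then d2 else d1) in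
      (1/2) * bern (a/2) (oX1c w) * bern (1 - 1/(2 - a)) (oX1p w)
            * bern (b/2) (oX2c w) * bern (1 - 1/(2 - b)) (oX2p w)
            * bern pd (oG11 w) * bern pc (oG21 w) * bern pd (oG22 w) * bern pc (oG12 w))"

text \<open>Achievable rate constraints (both common messages decoded at both receivers,
  private message decoded last at its own receiver).\<close>

definition HK_rates :: "real \<Rightarrow> real \<Rightarrow> real \<Rightarrow> real \<Rightarrow> real \<Rightarrow> real \<Rightarrow> real \<Rightarrow> real \<Rightarrow> bool" where
  "HK_rates pd pc d1 d2 r1c r1p r2c r2p \<longleftrightarrow>
     (      0 \<le> r1c \<and> 0 \<le> r1p \<and> 0 \<le> r2c \<and> 0 \<le> r2p \<and>
      r1p \<le> cmi Omega (joint pd pc d1 d2) oX1p oY1 (\<lambda>w. (oX1c w, oX2c w, oQ w, oGv1 w)) \<and>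
      r2p \<le> cmi Omega (joint pd pc d1 d2) oX2p oY2 (\<lambda>w. (oX1c w, oX2c w, oQ w, oGv2 w)) \<and>
      r1c + r2c \<le> cmi Omega (joint pd pc d1 d2) (\<lambda>w. (oX1c w, oX2c w)) oY1 (\<lambda>w. (oQ w, oGv1 w)) \<and>
      r1c \<le> cmi Omega (joint pd pc d1 d2) oX1c oY1 (\<lambda>w. (oX2c w, oQ w, oGv1 w)) \<and>
      r2c \<le> cmi Omega (joint pd pc d1 d2) oX2c oY1 (\<lambda>w. (oX1c w, oQ w, oGv1 w)) \<and>
      r1c + r2c \<le> cmi Omega (joint pd pc d1 d2) (\<lambda>w. (oX1c w, oX2c w)) oY2 (\<lambda>w. (oQ w, oGv2 w)) \<and>
      r1c \<le> cmi Omega (joint pd pc d1 d2) oX1c oY2 (\<lambda>w. (oX2c w, oQ w, oGv2 w)) \<and>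
      r2c \<le> cmi Omega (joint pd pc d1 d2) oX2c oY2 (\<lambda>w. (oX1c w, oQ w, oGv2 w)))"

text \<open>R_sum(d1,d2): the maximum (supremum of a nonempty, bounded, closed set) of the sum rate.\<close>

definition Rsum :: "real \<Rightarrow> real \<Rightarrow> real \<Rightarrow> real \<Rightarrow> real" where
  "Rsum pd pc d1 d2 =
     Sup {r1c + r1p + r2c + r2p | r1c r1p r2c r2p. HK_rates pd pc d1 d2 r1c r1p r2c r2p}"

definition Cstar :: "real \<Rightarrow> real \<Rightarrow> real" where
  "Cstar pd pc = (pd * pc - (pd - pc)) / (pd * pc - (pd - pc) / 2)"

end

theory Submission
  imports Defs "HOL-Real_Asymp.Real_Asymp"
begin

lemma pr_nonneg: "\<forall>v\<in>Om. 0 \<le> P v \<Longrightarrow> 0 \<le> pr Om P E"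
  unfolding pr_def by (rule sum_nonneg) auto

lemma pr_ge: assumes "finite Om" "\<forall>v\<in>Om. 0 \<le> P v" "w \<in> Om" "E w"
  shows "P w \<le> pr Om P E"
proof -
  have "(if E w then P w else 0) \<le> pr Om P E"
    unfolding pr_def using assms by (intro member_le_sum) auto
  thus ?thesis using assms by simp
qed

lemma pr_cong: "(\<And>v. v \<in> Om \<Longrightarrow> E v = E' v) \<Longrightarrow> (\<And>v. v \<in> Om \<Longrightarrow> P v = P' v) \<Longrightarrow> pr Om P E = pr Om P' E'"
  unfolding pr_def by (rule sum.cong) auto

lemma pr_mono: assumes "\<forall>v\<in>Om. 0 \<le> P v" "\<And>v. v \<in> Om \<Longrightarrow> E v \<Longrightarrow> E' v"
  shows "pr Om P E \<le> pr Om P E'"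
  unfolding pr_def using assms by (intro sum_mono) auto

lemma cmi_cong:
  assumes "\<And>v w. v \<in> Om \<Longrightarrow> w \<in> Om \<Longrightarrow> (A v = A w) = (A' v = A' w)"
    "\<And>v w. v \<in> Om \<Longrightarrow> w \<in> Om \<Longrightarrow> (B v = B w) = (B' v = B' w)"
    "\<And>v w. v \<in> Om \<Longrightarrow> w \<in> Om \<Longrightarrow> (C v = C w) = (C' v = C' w)"
    "\<And>v. v \<in> Om \<Longrightarrow> P v = P' v"
  shows "cmi Om P A B C = cmi Om P' A' B' C'"
  unfolding cmi_def
proof (rule sum.cong[OF refl])
  fix w assume w: "w \<in> Om"
  have e: "\<And>E E'. (\<And>v. v \<in> Om \<Longrightarrow> E v = E' v) \<Longrightarrow> pr Om P E = pr Om P' E'"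
    by (rule pr_cong) (auto simp: assms(4))
  have 1: "pr Om P (\<lambda>v. A v = A w \<and> B v = B w \<and> C v = C w) = pr Om P' (\<lambda>v. A' v = A' w \<and> B' v = B' w \<and> C' v = C' w)"
    by (rule e) (simp add: assms(1-3) w)
  have 2: "pr Om P (\<lambda>v. C v = C w) = pr Om P' (\<lambda>v. C' v = C' w)"
    by (rule e) (simp add: assms(1-3) w)
  have 3: "pr Om P (\<lambda>v. A v = A w \<and> C v = C w) = pr Om P' (\<lambda>v. A' v = A' w \<and> C' v = C' w)"
    by (rule e) (simp add: assms(1-3) w)
  have 4: "pr Om P (\<lambda>v. B v = B w \<and> C v = C w) = pr Om P' (\<lambda>v. B' v = B' w \<and> C' v = C' w)"
    by (rule e) (simp add: assms(1-3) w)
  show "P w * log 2 (pr Om P (\<lambda>v. A v = A w \<and> B v = B w \<and> C v = C w) * pr Om P (\<lambda>v. C v = C w) /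
          (pr Om P (\<lambda>v. A v = A w \<and> C v = C w) * pr Om P (\<lambda>v. B v = B w \<and> C v = C w))) =
      P' w * log 2 (pr Om P' (\<lambda>v. A' v = A' w \<and> B' v = B' w \<and> C' v = C' w) * pr Om P' (\<lambda>v. C' v = C' w) /
          (pr Om P' (\<lambda>v. A' v = A' w \<and> C' v = C' w) * pr Om P' (\<lambda>v. B' v = B' w \<and> C' v = C' w)))"
    unfolding 1 2 3 4 using assms(4) w by simp
qed

definition ent :: "'w set \<Rightarrow> ('w \<Rightarrow> real) \<Rightarrow> ('w \<Rightarrow> 'a) \<Rightarrow> real" where
  "ent Om P F = - (\<Sum>w\<in>Om. P w * log 2 (pr Om P (\<lambda>v. F v = F w)))"

lemma cmi_ent:
  assumes fin: "finite Om" and nn: "\<forall>w\<in>Om. 0 \<le> P w"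
  shows "cmi Om P A B C = ent Om P (\<lambda>w. (A w, C w)) + ent Om P (\<lambda>w. (B w, C w))
          - ent Om P (\<lambda>w. (A w, B w, C w)) - ent Om P C"
proof -
  have "\<And>w. w \<in> Om \<Longrightarrow> P w *
        log 2 ((pr Om P (\<lambda>v. A v = A w \<and> B v = B w \<and> C v = C w) * pr Om P (\<lambda>v. C v = C w))
             / (pr Om P (\<lambda>v. A v = A w \<and> C v = C w) * pr Om P (\<lambda>v. B v = B w \<and> C v = C w)))
     = P w * log 2 (pr Om P (\<lambda>v. (A v, B v, C v) = (A w, B w, C w))) + P w * log 2 (pr Om P (\<lambda>v. C v = C w))
      - P w * log 2 (pr Om P (\<lambda>v. (A v, C v) = (A w, C w))) - P w * log 2 (pr Om P (\<lambda>v. (B v, C v) = (B w, C w)))"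
  proof -
    fix w assume w: "w \<in> Om"
    show "?thesis w"
    proof (cases "P w = 0")
      case True then show ?thesis by simp
    next
      case False
      then have pw: "0 < P w" using nn w by force
      have g: "\<And>E. E w \<Longrightarrow> 0 < pr Om P E" using pr_ge[OF fin nn w] pw by force
      have 1: "0 < pr Om P (\<lambda>v. A v = A w \<and> B v = B w \<and> C v = C w)" by (rule g) simp
      have 2: "0 < pr Om P (\<lambda>v. C v = C w)" by (rule g) simp
      have 3: "0 < pr Om P (\<lambda>v. A v = A w \<and> C v = C w)" by (rule g) simp
      have 4: "0 < pr Om P (\<lambda>v. B v = B w \<and> C v = C w)" by (rule g) simp
      show ?thesis using 1 2 3 4
        by (simp add: log_mult log_divide algebra_simps)
    qed
  qed
  then show ?thesis unfolding cmi_def ent_def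
    by (simp add: sum.distrib sum_subtractf)
qed

lemma sum_push:
  assumes "finite Om" "finite Om'" "\<pi> ` Om \<subseteq> Om'"
  shows "(\<Sum>y\<in>Om'. (\<Sum>w\<in>{w\<in>Om. \<pi> w = y}. P w) * f y) = (\<Sum>w\<in>Om. P w * (f (\<pi> w)::real))"
proof -
  have "(\<Sum>y\<in>Om'. (\<Sum>w\<in>{w\<in>Om. \<pi> w = y}. P w) * f y) = (\<Sum>y\<in>Om'. (\<Sum>w\<in>{w\<in>Om. \<pi> w = y}. P w * f y))"
    by (rule sum.cong[OF refl], rule sum_distrib_right)
  also have "\<dots> = (\<Sum>y\<in>Om'. (\<Sum>w\<in>{w\<in>Om. \<pi> w = y}. P w * f (\<pi> w)))"
    by (auto intro!: sum.cong)
  also have "\<dots> = (\<Sum>w\<in>Om. P w * f (\<pi> w))"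
    using assms by (rule sum.group)
  finally show ?thesis .
qed

lemma pr_push:
  assumes "finite Om" "finite Om'" "\<pi> ` Om \<subseteq> Om'"
    and P': "\<And>y. y \<in> Om' \<Longrightarrow> P' y = (\<Sum>w\<in>{w\<in>Om. \<pi> w = y}. P w)"
  shows "pr Om' P' E = pr Om P (\<lambda>w. E (\<pi> w))"
proof -
  have "pr Om' P' E = (\<Sum>y\<in>Om'. (\<Sum>w\<in>{w\<in>Om. \<pi> w = y}. P w) * (if E y then 1 else 0))"
    unfolding pr_def by (rule sum.cong) (auto simp: P')
  also have "\<dots> = (\<Sum>w\<in>Om. P w * (if E (\<pi> w) then 1 else 0))"
    by (rule sum_push[OF assms(1-3)])
  also have "\<dots> = pr Om P (\<lambda>w. E (\<pi> w))" unfolding pr_def by (rule sum.cong) auto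
  finally show ?thesis .
qed

lemma cmi_push0:
  assumes fin: "finite Om" "finite Om'" "\<pi> ` Om \<subseteq> Om'"
    and P': "\<And>y. y \<in> Om' \<Longrightarrow> P' y = (\<Sum>w\<in>{w\<in>Om. \<pi> w = y}. P w)"
  shows "cmi Om P (\<lambda>w. A' (\<pi> w)) (\<lambda>w. B' (\<pi> w)) (\<lambda>w. C' (\<pi> w)) = cmi Om' P' A' B' C'"
proof -
  define f where "f y = log 2 ((pr Om' P' (\<lambda>v. A' v = A' y \<and> B' v = B' y \<and> C' v = C' y) * pr Om' P' (\<lambda>v. C' v = C' y))
             / (pr Om' P' (\<lambda>v. A' v = A' y \<and> C' v = C' y) * pr Om' P' (\<lambda>v. B' v = B' y \<and> C' v = C' y)))" for y
  have pp: "\<And>E. pr Om' P' E = pr Om P (\<lambda>w. E (\<pi> w))" by (rule pr_push[OF fin P'])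
  have "cmi Om' P' A' B' C' = (\<Sum>y\<in>Om'. (\<Sum>w\<in>{w\<in>Om. \<pi> w = y}. P w) * f y)"
    unfolding cmi_def f_def by (rule sum.cong) (auto simp: P')
  also have "\<dots> = (\<Sum>w\<in>Om. P w * f (\<pi> w))" by (rule sum_push[OF fin])
  also have "\<dots> = cmi Om P (\<lambda>w. A' (\<pi> w)) (\<lambda>w. B' (\<pi> w)) (\<lambda>w. C' (\<pi> w))"
    unfolding cmi_def f_def pp by simp
  finally show ?thesis by simp
qed

lemma cmi_push:
  assumes fin: "finite Om" "finite Om'" "\<pi> ` Om \<subseteq> Om'"
    and P': "\<And>y. y \<in> Om' \<Longrightarrow> P' y = (\<Sum>w\<in>{w\<in>Om. \<pi> w = y}. P w)"
    and eq: "\<And>w. w \<in> Om \<Longrightarrow> A w = A' (\<pi> w) \<and> B w = B' (\<pi> w) \<and> C w = C' (\<pi> w)"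
  shows "cmi Om P A B C = cmi Om' P' A' B' C'"
proof -
  have "cmi Om P A B C = cmi Om P (\<lambda>w. A' (\<pi> w)) (\<lambda>w. B' (\<pi> w)) (\<lambda>w. C' (\<pi> w))"
    by (rule cmi_cong) (simp_all add: eq)
  also have "\<dots> = cmi Om' P' A' B' C'" by (rule cmi_push0[OF fin P'])
  finally show ?thesis .
qed

lemma cmi_bij:
  assumes fin: "finite Om" and bij: "bij_betw h Om Om'"
    and P: "\<And>w. w \<in> Om \<Longrightarrow> P w = P' (h w)"
    and eq: "\<And>w. w \<in> Om \<Longrightarrow> A w = A' (h w) \<and> B w = B' (h w) \<and> C w = C' (h w)"
  shows "cmi Om P A B C = cmi Om' P' A' B' C'"
proof (rule cmi_push[where \<pi>=h])
  show "\<And>w. w \<in> Om \<Longrightarrow> A w = A' (h w) \<and> B w = B' (h w) \<and> C w = C' (h w)" by (rule eq)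
  show "finite Om" by (rule fin)
  show "finite Om'" using bij fin bij_betw_finite by blast
  show "h ` Om \<subseteq> Om'" using bij by (simp add: bij_betw_def)
  fix y assume y: "y \<in> Om'"
  then obtain w where w: "w \<in> Om" "h w = y" using bij by (auto simp: bij_betw_def)
  have "{w' \<in> Om. h w' = y} = {w}" using w bij by (auto simp: bij_betw_def inj_on_def)
  then show "P' y = (\<Sum>w\<in>{w \<in> Om. h w = y}. P w)" using w P by simp
qed

lemma sum_prod_split: "sum g (A \<times> B) = (\<Sum>a\<in>A. \<Sum>b\<in>B. g (a,b))"
  by (subst sum.cartesian_product) simp

lemma pr_cell:
  assumes K: "finite K" and k: "k \<in> K" and x: "x \<in> X"
    and det: "\<And>k' x'. k' \<in> K \<Longrightarrow> x' \<in> X \<Longrightarrow> C (k',x') = C (k,x) \<Longrightarrow> k' = k"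
  shows "pr (K \<times> X) (\<lambda>(k,x). Pk k * Px k x) (\<lambda>v. E v \<and> C v = C (k,x))
       = Pk k * pr X (Px k) (\<lambda>x'. E (k,x') \<and> C (k,x') = C (k,x))"
proof -
  have "pr (K \<times> X) (\<lambda>(k,x). Pk k * Px k x) (\<lambda>v. E v \<and> C v = C (k,x))
     = (\<Sum>k'\<in>K. \<Sum>x'\<in>X. if E (k',x') \<and> C (k',x') = C (k,x) then Pk k' * Px k' x' else 0)"
    unfolding pr_def sum_prod_split by (simp only: prod.case)
  also have "\<dots> = (\<Sum>k'\<in>K. if k' = k then (\<Sum>x'\<in>X. if E (k,x') \<and> C (k,x') = C (k,x) then Pk k * Px k x' else 0) else 0)"
    apply (rule sum.cong, simp)
    using det by (auto intro!: sum.neutral)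
  also have "\<dots> = Pk k * pr X (Px k) (\<lambda>x'. E (k,x') \<and> C (k,x') = C (k,x))"
    using K k unfolding pr_def by (simp add: sum_distrib_left if_distrib cong: if_cong)
  finally show ?thesis .
qed

lemma cmi_cell:
  assumes K: "finite K"
    and det: "\<And>k x k' x'. k \<in> K \<Longrightarrow> x \<in> X \<Longrightarrow> k' \<in> K \<Longrightarrow> x' \<in> X \<Longrightarrow> C (k',x') = C (k,x) \<Longrightarrow> k' = k"
  shows "cmi (K \<times> X) (\<lambda>(k,x). Pk k * Px k x) A B C
       = (\<Sum>k\<in>K. Pk k * cmi X (Px k) (\<lambda>x. A (k,x)) (\<lambda>x. B (k,x)) (\<lambda>x. C (k,x)))"
proof -
  let ?P = "(\<lambda>(k,x). Pk k * Px k x)"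
  have c1: "\<And>k x E. k \<in> K \<Longrightarrow> x \<in> X \<Longrightarrow> pr (K \<times> X) ?P (\<lambda>v. E v \<and> C v = C (k,x))
       = Pk k * pr X (Px k) (\<lambda>x'. E (k,x') \<and> C (k,x') = C (k,x))"
    by (rule pr_cell[OF K]) (auto intro: det)
  have c2: "\<And>k x. k \<in> K \<Longrightarrow> x \<in> X \<Longrightarrow> pr (K \<times> X) ?P (\<lambda>v. C v = C (k,x))
       = Pk k * pr X (Px k) (\<lambda>x'. C (k,x') = C (k,x))"
    using c1[where E="\<lambda>_. True"] by simp
  have "cmi (K \<times> X) ?P A B C = (\<Sum>k\<in>K. \<Sum>x\<in>X. Pk k * (Px k x *
        log 2 ((pr X (Px k) (\<lambda>v. A (k,v) = A (k,x) \<and> B (k,v) = B (k,x) \<and> C (k,v) = C (k,x)) * pr X (Px k) (\<lambda>v. C (k,v) = C (k,x)))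
             / (pr X (Px k) (\<lambda>v. A (k,v) = A (k,x) \<and> C (k,v) = C (k,x)) * pr X (Px k) (\<lambda>v. B (k,v) = B (k,x) \<and> C (k,v) = C (k,x))))))"
    unfolding cmi_def sum_prod_split prod.case
  proof (rule sum.cong[OF refl], rule sum.cong[OF refl])
    fix k x assume k: "k \<in> K" and x: "x \<in> X"
    have e1: "pr (K \<times> X) ?P (\<lambda>v. A v = A (k,x) \<and> B v = B (k,x) \<and> C v = C (k,x)) =
         Pk k * pr X (Px k) (\<lambda>v. A (k,v) = A (k,x) \<and> B (k,v) = B (k,x) \<and> C (k,v) = C (k,x))"
      using c1[OF k x, of "\<lambda>v. A v = A (k,x) \<and> B v = B (k,x)"] by simp
    have e2: "pr (K \<times> X) ?P (\<lambda>v. A v = A (k,x) \<and> C v = C (k,x)) =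
         Pk k * pr X (Px k) (\<lambda>v. A (k,v) = A (k,x) \<and> C (k,v) = C (k,x))"
      using c1[OF k x, of "\<lambda>v. A v = A (k,x)"] by simp
    have e3: "pr (K \<times> X) ?P (\<lambda>v. B v = B (k,x) \<and> C v = C (k,x)) =
         Pk k * pr X (Px k) (\<lambda>v. B (k,v) = B (k,x) \<and> C (k,v) = C (k,x))"
      using c1[OF k x, of "\<lambda>v. B v = B (k,x)"] by simp
    show "(Pk k * Px k x) *
        log 2 (pr (K \<times> X) ?P (\<lambda>v. A v = A (k, x) \<and> B v = B (k, x) \<and> C v = C (k, x)) *
            pr (K \<times> X) ?P (\<lambda>v. C v = C (k, x)) /
            (pr (K \<times> X) ?P (\<lambda>v. A v = A (k, x) \<and> C v = C (k, x)) *
             pr (K \<times> X) ?P (\<lambda>v. B v = B (k, x) \<and> C v = C (k, x)))) = Pk k * (Px k x *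
        log 2 ((pr X (Px k) (\<lambda>v. A (k,v) = A (k,x) \<and> B (k,v) = B (k,x) \<and> C (k,v) = C (k,x)) * pr X (Px k) (\<lambda>v. C (k,v) = C (k,x)))
             / (pr X (Px k) (\<lambda>v. A (k,v) = A (k,x) \<and> C (k,v) = C (k,x)) * pr X (Px k) (\<lambda>v. B (k,v) = B (k,x) \<and> C (k,v) = C (k,x)))))"
      unfolding e1 e2 e3 c2[OF k x]
      by (cases "Pk k = 0") (simp_all add: mult_ac)
  qed
  also have "\<dots> = (\<Sum>k\<in>K. Pk k * cmi X (Px k) (\<lambda>x. A (k,x)) (\<lambda>x. B (k,x)) (\<lambda>x. C (k,x)))"
    unfolding cmi_def by (simp add: sum_distrib_left)
  finally show ?thesis .
qed

definition xlx :: "real \<Rightarrow> real" where "xlx x = x * log 2 x"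
definition hb :: "real \<Rightarrow> real" where "hb t = - xlx t - xlx (1 - t)"

lemma ent_cong:
  assumes "\<And>v w. v \<in> Om \<Longrightarrow> w \<in> Om \<Longrightarrow> (F v = F w) = (G v = G w)"
  shows "ent Om P F = ent Om P G"
  unfolding ent_def
proof -
  have "\<And>w. w \<in> Om \<Longrightarrow> pr Om P (\<lambda>v. F v = F w) = pr Om P (\<lambda>v. G v = G w)"
    by (rule pr_cong) (auto simp: assms)
  then show "- (\<Sum>w\<in>Om. P w * log 2 (pr Om P (\<lambda>v. F v = F w))) = - (\<Sum>w\<in>Om. P w * log 2 (pr Om P (\<lambda>v. G v = G w)))"
    by simp
qed

lemma pr_compl: "pr Om P (\<lambda>v. \<not> F v) = sum P Om - pr Om P F"
  unfolding pr_def by (simp add: sum_subtractf[symmetric] if_distrib cong: if_cong) (rule sum.cong, auto)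

lemma ent_bool:
  fixes F :: "'w \<Rightarrow> bool"
  assumes tot: "sum P Om = 1"
  shows "ent Om P F = hb (pr Om P F)"
proof -
  have "\<And>w. w \<in> Om \<Longrightarrow> P w * log 2 (pr Om P (\<lambda>v. F v = F w)) =
        (if F w then P w else 0) * log 2 (pr Om P F) + (if \<not> F w then P w else 0) * log 2 (pr Om P (\<lambda>v. \<not> F v))"
    by (auto)
  then have "(\<Sum>w\<in>Om. P w * log 2 (pr Om P (\<lambda>v. F v = F w))) =
      (\<Sum>w\<in>Om. (if F w then P w else 0) * log 2 (pr Om P F) + (if \<not> F w then P w else 0) * log 2 (pr Om P (\<lambda>v. \<not> F v)))"
    by (rule sum.cong[OF refl])
  also have "\<dots> = pr Om P F * log 2 (pr Om P F) + pr Om P (\<lambda>v. \<not> F v) * log 2 (pr Om P (\<lambda>v. \<not> F v))"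
    unfolding pr_def by (simp add: sum.distrib sum_distrib_right)
  finally show ?thesis unfolding ent_def hb_def xlx_def pr_compl tot by simp
qed

lemma ent_const:
  assumes tot: "sum P Om = 1"
  shows "ent Om P (\<lambda>_. c) = 0"
  unfolding ent_def pr_def using tot by simp

lemma ent_cell:
  assumes K: "finite K" and X: "finite X"
    and nn: "\<And>k. k \<in> K \<Longrightarrow> 0 \<le> Pk k" "\<And>k x. k \<in> K \<Longrightarrow> x \<in> X \<Longrightarrow> 0 \<le> Px k x"
    and tot: "\<And>k. k \<in> K \<Longrightarrow> sum (Px k) X = 1"
    and det: "\<And>k x k' x'. k \<in> K \<Longrightarrow> x \<in> X \<Longrightarrow> k' \<in> K \<Longrightarrow> x' \<in> X \<Longrightarrow> F (k',x') = F (k,x) \<Longrightarrow> k' = k"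
  shows "ent (K \<times> X) (\<lambda>(k,x). Pk k * Px k x) F
       = ent K Pk (\<lambda>k. k) + (\<Sum>k\<in>K. Pk k * ent X (Px k) (\<lambda>x. F (k,x)))"
proof -
  let ?P = "(\<lambda>(k,x). Pk k * Px k x)"
  have c: "\<And>k x. k \<in> K \<Longrightarrow> x \<in> X \<Longrightarrow> pr (K \<times> X) ?P (\<lambda>v. F v = F (k,x))
       = Pk k * pr X (Px k) (\<lambda>x'. F (k,x') = F (k,x))"
    using pr_cell[OF K _ _ det, where E="\<lambda>_. True"] by simp
  have s: "\<And>k. k \<in> K \<Longrightarrow> pr K Pk (\<lambda>k'. k' = k) = Pk k"
    unfolding pr_def using K by (simp add: if_distrib cong: if_cong)
  have "(\<Sum>v\<in>K \<times> X. ?P v * log 2 (pr (K \<times> X) ?P (\<lambda>v'. F v' = F v)))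
     = (\<Sum>k\<in>K. \<Sum>x\<in>X. Pk k * Px k x * log 2 (Pk k) + Pk k * (Px k x * log 2 (pr X (Px k) (\<lambda>x'. F (k,x') = F (k,x)))))"
    unfolding sum_prod_split prod.case
  proof (rule sum.cong[OF refl], rule sum.cong[OF refl])
    fix k x assume k: "k \<in> K" and x: "x \<in> X"
    show "Pk k * Px k x * log 2 (pr (K \<times> X) ?P (\<lambda>v'. F v' = F (k, x))) =
      Pk k * Px k x * log 2 (Pk k) + Pk k * (Px k x * log 2 (pr X (Px k) (\<lambda>x'. F (k, x') = F (k, x))))"
    proof (cases "Pk k = 0 \<or> Px k x = 0")
      case True then show ?thesis by auto
    next
      case False
      then have "0 < Pk k" "0 < Px k x" using nn k x by force+
      moreover have "Px k x \<le> pr X (Px k) (\<lambda>x'. F (k, x') = F (k, x))"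
        by (rule pr_ge[OF X]) (use nn k x in auto)
      ultimately show ?thesis unfolding c[OF k x] by (simp add: log_mult algebra_simps)
    qed
  qed
  also have "\<dots> = (\<Sum>k\<in>K. Pk k * log 2 (Pk k)) + (\<Sum>k\<in>K. Pk k * (\<Sum>x\<in>X. Px k x * log 2 (pr X (Px k) (\<lambda>x'. F (k,x') = F (k,x)))))"
    by (simp add: sum.distrib sum_distrib_left[symmetric] sum_distrib_right[symmetric] tot mult.assoc
         mult.commute[of "Px _ _"])
  finally have fin: "(\<Sum>v\<in>K \<times> X. ?P v * log 2 (pr (K \<times> X) ?P (\<lambda>v'. F v' = F v))) = (\<Sum>k\<in>K. Pk k * log 2 (Pk k)) + (\<Sum>k\<in>K. Pk k * (\<Sum>x\<in>X. Px k x * log 2 (pr X (Px k) (\<lambda>x'. F (k,x') = F (k,x)))))" .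
  have s2: "(\<Sum>k\<in>K. Pk k * log 2 (pr K Pk (\<lambda>k'. k' = k))) = (\<Sum>k\<in>K. Pk k * log 2 (Pk k))"
    by (rule sum.cong) (simp_all add: s)
  have s3: "(\<Sum>k\<in>K. Pk k * - (\<Sum>x\<in>X. Px k x * log 2 (pr X (Px k) (\<lambda>x'. F (k,x') = F (k,x)))))
      = - (\<Sum>k\<in>K. Pk k * (\<Sum>x\<in>X. Px k x * log 2 (pr X (Px k) (\<lambda>x'. F (k,x') = F (k,x)))))"
    by (simp add: sum_negf)
  show ?thesis unfolding ent_def s2 s3 fin by simp
qed

lemma sum_pr_marg:
  assumes fin: "finite Om" and sub: "F ` Om \<subseteq> I" and fI: "finite I"
  shows "(\<Sum>x\<in>I. pr Om P (\<lambda>v. F v = x \<and> E v)) = pr Om P E"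
proof -
  have "(\<Sum>x\<in>I. pr Om P (\<lambda>v. F v = x \<and> E v)) = (\<Sum>w\<in>Om. \<Sum>x\<in>I. if F w = x \<and> E w then P w else 0)"
    unfolding pr_def by (rule sum.swap)
  also have "\<dots> = (\<Sum>w\<in>Om. if E w then P w else 0)"
  proof (rule sum.cong[OF refl])
    fix w assume "w \<in> Om"
    then have "F w \<in> I" using sub by auto
    then show "(\<Sum>x\<in>I. if F w = x \<and> E w then P w else 0) = (if E w then P w else 0)"
      using fI by (simp add: if_distrib[symmetric] cong: if_cong)
  qed
  finally show ?thesis unfolding pr_def .
qed

lemma gibbs_term:
  fixes a c d e p :: real
  assumes pos: "0 < a" "0 < c" "0 < d" "0 < e" and pw: "0 \<le> p"
  shows "(p - p * (d * e / (a * c))) / ln 2 \<le> p * log 2 (a * c / (d * e))"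
proof -
  define y where "y = a * c / (d * e)"
  have y: "0 < y" using pos unfolding y_def by simp
  have "ln (1 / y) \<le> 1 / y - 1" using y by (intro ln_le_minus_one) simp
  then have ly: "1 - 1 / y \<le> ln y" using y by (simp add: ln_div)
  have "(p - p * (d * e / (a * c))) / ln 2 = p * ((1 - 1/y) / ln 2)"
    unfolding y_def using pos by (simp add: field_simps)
  also have "\<dots> \<le> p * (ln y / ln 2)"
    using ly pw by (intro mult_left_mono divide_right_mono) auto
  also have "\<dots> = p * log 2 (a * c / (d * e))" unfolding y_def log_def by simp
  finally show ?thesis .
qed

lemma cmi_nonneg:
  assumes fin: "finite Om" and nn: "\<forall>w\<in>Om. 0 \<le> P w"
  shows "0 \<le> cmi Om P A B C"
proof -
  define pABC where "pABC t = pr Om P (\<lambda>v. (A v, B v, C v) = t)" for t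
  define pAC where "pAC x z = pr Om P (\<lambda>v. A v = x \<and> C v = z)" for x z
  define pBC where "pBC y z = pr Om P (\<lambda>v. B v = y \<and> C v = z)" for y z
  define pC where "pC z = pr Om P (\<lambda>v. C v = z)" for z
  define g where "g t = (case t of (x,y,z) \<Rightarrow> pAC x z * pBC y z / pC z)" for t
  define T where "T w = (A w, B w, C w)" for w
  have gnn: "\<And>t. 0 \<le> g t" unfolding g_def pAC_def pBC_def pC_def using nn
    by (auto split: prod.split intro!: divide_nonneg_nonneg mult_nonneg_nonneg pr_nonneg)
  have a_eq: "\<And>w. pr Om P (\<lambda>v. A v = A w \<and> B v = B w \<and> C v = C w) = pABC (T w)"
    unfolding pABC_def T_def by simp
  have q_eq: "\<And>w. P w * (pr Om P (\<lambda>v. A v = A w \<and> C v = C w) * pr Om P (\<lambda>v. B v = B w \<and> C v = C w)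
        / (pr Om P (\<lambda>v. A v = A w \<and> B v = B w \<and> C v = C w) * pr Om P (\<lambda>v. C v = C w)))
      = P w / pABC (T w) * g (T w)"
    unfolding a_eq g_def T_def pAC_def pBC_def pC_def by simp
  have step1: "\<And>w. w \<in> Om \<Longrightarrow> (P w - P w * (pr Om P (\<lambda>v. A v = A w \<and> C v = C w) * pr Om P (\<lambda>v. B v = B w \<and> C v = C w)
        / (pr Om P (\<lambda>v. A v = A w \<and> B v = B w \<and> C v = C w) * pr Om P (\<lambda>v. C v = C w)))) / ln 2
      \<le> P w * log 2 ((pr Om P (\<lambda>v. A v = A w \<and> B v = B w \<and> C v = C w) * pr Om P (\<lambda>v. C v = C w))
             / (pr Om P (\<lambda>v. A v = A w \<and> C v = C w) * pr Om P (\<lambda>v. B v = B w \<and> C v = C w)))"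
  proof -
    fix w assume w: "w \<in> Om"
    show "?thesis w"
    proof (cases "P w = 0")
      case True then show ?thesis by simp
    next
      case False
      then have pw: "0 < P w" using nn w by force
      have g: "\<And>E. E w \<Longrightarrow> 0 < pr Om P E" using pr_ge[OF fin nn w] pw by force
      show ?thesis using pw by (intro gibbs_term g) auto
    qed
  qed
  have IA: "finite (A ` Om)" "finite (B ` Om)" "finite (C ` Om)" using fin by auto
  have sumT: "\<And>t. t \<in> T ` Om \<Longrightarrow> (\<Sum>w\<in>{w\<in>Om. T w = t}. P w) = pABC t"
    unfolding pABC_def pr_def T_def by (rule sum.mono_neutral_cong_left) (use fin in auto)
  have "(\<Sum>w\<in>Om. P w / pABC (T w) * g (T w)) = (\<Sum>t\<in>T ` Om. \<Sum>w\<in>{w\<in>Om. T w = t}. P w / pABC (T w) * g (T w))"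
    using fin by (intro sum.group[symmetric]) auto
  also have "\<dots> = (\<Sum>t\<in>T ` Om. pABC t / pABC t * g t)"
  proof (rule sum.cong[OF refl])
    fix t assume t: "t \<in> T ` Om"
    have "(\<Sum>w\<in>{w\<in>Om. T w = t}. P w / pABC (T w) * g (T w)) = (\<Sum>w\<in>{w\<in>Om. T w = t}. P w) / pABC t * g t"
      by (simp add: sum_divide_distrib sum_distrib_right)
    then show "(\<Sum>w\<in>{w\<in>Om. T w = t}. P w / pABC (T w) * g (T w)) = pABC t / pABC t * g t"
      using sumT[OF t] by simp
  qed
  also have "\<dots> \<le> (\<Sum>t\<in>T ` Om. g t)"
    by (intro sum_mono) (auto intro: mult_left_le_one_le gnn simp: divide_le_eq_1)
  also have "\<dots> \<le> (\<Sum>t\<in>A ` Om \<times> (B ` Om \<times> C ` Om). g t)"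
    using IA gnn by (intro sum_mono2) (auto simp: T_def)
  also have "\<dots> = (\<Sum>x\<in>A ` Om. \<Sum>y\<in>B ` Om. \<Sum>z\<in>C ` Om. pAC x z * pBC y z / pC z)"
    unfolding sum_prod_split g_def by simp
  also have "\<dots> = (\<Sum>x\<in>A ` Om. \<Sum>z\<in>C ` Om. \<Sum>y\<in>B ` Om. pAC x z * pBC y z / pC z)"
    by (rule sum.cong[OF refl], rule sum.swap)
  also have "\<dots> = (\<Sum>z\<in>C ` Om. \<Sum>x\<in>A ` Om. \<Sum>y\<in>B ` Om. pAC x z * pBC y z / pC z)"
    by (rule sum.swap)
  also have "\<dots> = (\<Sum>z\<in>C ` Om. (\<Sum>x\<in>A ` Om. pAC x z) * (\<Sum>y\<in>B ` Om. pBC y z) / pC z)"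
    by (simp add: sum_product sum_divide_distrib)
  also have "\<dots> = (\<Sum>z\<in>C ` Om. pC z * pC z / pC z)"
  proof (rule sum.cong[OF refl])
    fix z
    have "(\<Sum>x\<in>A ` Om. pAC x z) = pC z" unfolding pAC_def pC_def
      by (rule sum_pr_marg[OF fin _ IA(1)]) auto
    moreover have "(\<Sum>y\<in>B ` Om. pBC y z) = pC z" unfolding pBC_def pC_def
      by (rule sum_pr_marg[OF fin _ IA(2)]) auto
    ultimately show "(\<Sum>x\<in>A ` Om. pAC x z) * (\<Sum>y\<in>B ` Om. pBC y z) / pC z = pC z * pC z / pC z" by simp
  qed
  also have "\<dots> \<le> (\<Sum>z\<in>C ` Om. pC z)"
    by (intro sum_mono) (simp add: pC_def)
  also have "\<dots> = sum P Om"
  proof -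
    have "(\<Sum>z\<in>C ` Om. pC z) = pr Om P (\<lambda>_. True)"
      unfolding pC_def using sum_pr_marg[where F=C and I="C ` Om" and P=P and E="\<lambda>_. True" and Om=Om] fin by simp
    then show ?thesis unfolding pr_def by simp
  qed
  finally have s2: "(\<Sum>w\<in>Om. P w / pABC (T w) * g (T w)) \<le> sum P Om" .
  have "0 \<le> (sum P Om - (\<Sum>w\<in>Om. P w / pABC (T w) * g (T w))) / ln 2" using s2 by simp
  also have "\<dots> = (\<Sum>w\<in>Om. (P w - P w * (pr Om P (\<lambda>v. A v = A w \<and> C v = C w) * pr Om P (\<lambda>v. B v = B w \<and> C v = C w)
        / (pr Om P (\<lambda>v. A v = A w \<and> B v = B w \<and> C v = C w) * pr Om P (\<lambda>v. C v = C w)))) / ln 2)"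
    unfolding q_eq sum_divide_distrib[symmetric] sum_subtractf by (rule refl)
  also have "\<dots> \<le> cmi Om P A B C" unfolding cmi_def by (rule sum_mono) (rule step1)
  finally show ?thesis .
qed

lemma sum_prod_P:
  fixes Pk :: "'k \<Rightarrow> real"
  assumes "finite K" "finite X"
  shows "sum (\<lambda>(k,x). Pk k * Px k x) (K \<times> X) = (\<Sum>k\<in>K. Pk k * sum (Px k) X)"
  unfolding sum_prod_split prod.case by (rule sum.cong[OF refl]) (simp add: sum_distrib_left)

lemma cmi_fst:
  fixes B :: "'k \<times> 'x \<Rightarrow> bool"
  assumes K: "finite K" and X: "finite X"
    and nn: "\<And>k. k \<in> K \<Longrightarrow> 0 \<le> Pk k" "\<And>k x. k \<in> K \<Longrightarrow> x \<in> X \<Longrightarrow> 0 \<le> Px k x"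
    and totK: "sum Pk K = 1" and tot: "\<And>k. k \<in> K \<Longrightarrow> sum (Px k) X = 1"
  shows "cmi (K \<times> X) (\<lambda>(k,x). Pk k * Px k x) (\<lambda>v. fst v) B (\<lambda>_. c)
       = hb (pr (K \<times> X) (\<lambda>(k,x). Pk k * Px k x) B) - (\<Sum>k\<in>K. Pk k * hb (pr X (Px k) (\<lambda>x. B (k,x))))"
proof -
  let ?P = "(\<lambda>(k,x). Pk k * Px k x)"
  have fin: "finite (K \<times> X)" using K X by simp
  have nnP: "\<forall>w\<in>K \<times> X. 0 \<le> ?P w" using nn by auto
  have tP: "sum ?P (K \<times> X) = 1" unfolding sum_prod_P[OF K X] using totK tot by simp
  have e1: "ent (K \<times> X) ?P (\<lambda>w. (fst w, c)) = ent K Pk (\<lambda>k. k)"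
  proof -
    have "ent (K \<times> X) ?P (\<lambda>w. (fst w, c)) = ent K Pk (\<lambda>k. k) + (\<Sum>k\<in>K. Pk k * ent X (Px k) (\<lambda>x. (k, c)))"
      by (subst ent_cell[OF K X nn tot]) auto
    also have "(\<Sum>k\<in>K. Pk k * ent X (Px k) (\<lambda>x. (k, c))) = 0"
      by (rule sum.neutral) (simp add: ent_const[OF tot])
    finally show ?thesis by simp
  qed
  have e2: "ent (K \<times> X) ?P (\<lambda>w. (B w, c)) = hb (pr (K \<times> X) ?P B)"
  proof -
    have "ent (K \<times> X) ?P (\<lambda>w. (B w, c)) = ent (K \<times> X) ?P B" by (rule ent_cong) auto
    also have "\<dots> = hb (pr (K \<times> X) ?P B)" by (rule ent_bool[OF tP])
    finally show ?thesis .
  qed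
  have e3: "ent (K \<times> X) ?P (\<lambda>w. (fst w, B w, c)) = ent K Pk (\<lambda>k. k) + (\<Sum>k\<in>K. Pk k * hb (pr X (Px k) (\<lambda>x. B (k,x))))"
  proof -
    have "ent (K \<times> X) ?P (\<lambda>w. (fst w, B w, c)) = ent K Pk (\<lambda>k. k) + (\<Sum>k\<in>K. Pk k * ent X (Px k) (\<lambda>x. (k, B (k,x), c)))"
      by (subst ent_cell[OF K X nn tot]) auto
    also have "(\<Sum>k\<in>K. Pk k * ent X (Px k) (\<lambda>x. (k, B (k,x), c))) = (\<Sum>k\<in>K. Pk k * hb (pr X (Px k) (\<lambda>x. B (k,x))))"
    proof (rule sum.cong[OF refl])
      fix k assume k: "k \<in> K"
      have "ent X (Px k) (\<lambda>x. (k, B (k,x), c)) = ent X (Px k) (\<lambda>x. B (k,x))" by (rule ent_cong) auto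
      also have "\<dots> = hb (pr X (Px k) (\<lambda>x. B (k,x)))" by (rule ent_bool[OF tot[OF k]])
      finally show "Pk k * ent X (Px k) (\<lambda>x. (k, B (k,x), c)) = Pk k * hb (pr X (Px k) (\<lambda>x. B (k,x)))" by simp
    qed
    finally show ?thesis .
  qed
  have e4: "ent (K \<times> X) ?P (\<lambda>_. c) = 0" by (rule ent_const[OF tP])
  show ?thesis unfolding cmi_ent[OF fin nnP] e1 e2 e3 e4 by simp
qed

lemma ent_coarse:
  assumes fin: "finite Om" and nn: "\<forall>w\<in>Om. 0 \<le> P w"
    and co: "\<And>v w. v \<in> Om \<Longrightarrow> w \<in> Om \<Longrightarrow> F v = F w \<Longrightarrow> G v = G w"
  shows "ent Om P G \<le> ent Om P F"
  unfolding ent_def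
proof -
  have "(\<Sum>w\<in>Om. P w * log 2 (pr Om P (\<lambda>v. F v = F w))) \<le> (\<Sum>w\<in>Om. P w * log 2 (pr Om P (\<lambda>v. G v = G w)))"
  proof (rule sum_mono)
    fix w assume w: "w \<in> Om"
    show "P w * log 2 (pr Om P (\<lambda>v. F v = F w)) \<le> P w * log 2 (pr Om P (\<lambda>v. G v = G w))"
    proof (cases "P w = 0")
      case True then show ?thesis by simp
    next
      case False
      then have pw: "0 < P w" using nn w by force
      have "P w \<le> pr Om P (\<lambda>v. F v = F w)" by (rule pr_ge[OF fin nn w]) simp
      moreover have "pr Om P (\<lambda>v. F v = F w) \<le> pr Om P (\<lambda>v. G v = G w)"
        by (rule pr_mono[OF nn]) (rule co[OF _ w], assumption+)
      ultimately show ?thesis using pw by (intro mult_left_mono log_mono) auto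
    qed
  qed
  then show "- (\<Sum>w\<in>Om. P w * log 2 (pr Om P (\<lambda>v. G v = G w))) \<le> - (\<Sum>w\<in>Om. P w * log 2 (pr Om P (\<lambda>v. F v = F w)))"
    by simp
qed

lemma sum_bool: "sum f (UNIV :: bool set) = f False + f True"
  by (simp add: UNIV_bool)

lemma xlx_0[simp]: "xlx 0 = 0" and xlx_1[simp]: "xlx 1 = 0" by (simp_all add: xlx_def)
lemma hb_0[simp]: "hb 0 = 0" and hb_1[simp]: "hb 1 = 0" by (simp_all add: hb_def)
lemma hb_sym: "hb (1 - t) = hb t" by (simp add: hb_def)
lemma hb_half: "hb (1/2) = 1"
  by (simp add: hb_def xlx_def log_divide)

lemma xlx_bound: assumes "0 \<le> t" shows "- xlx t \<le> (1/2 - t) / ln 2 + t"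
proof (cases "t = 0")
  case True then show ?thesis by simp
next
  case False
  with assms have t: "0 < t" by simp
  have "ln (1 / (2*t)) \<le> 1 / (2*t) - 1" using t by (intro ln_le_minus_one) simp
  then have "t * ln (1 / (2*t)) \<le> t * (1 / (2*t) - 1)" using t by (intro mult_left_mono) auto
  also have "\<dots> = 1/2 - t" using t by (simp add: field_simps)
  finally have a: "t * ln (1 / (2*t)) \<le> 1/2 - t" .
  have L: "ln (1 / (2*t)) = - ln 2 - ln t" using t by (simp add: ln_div ln_mult)
  have l2: "0 < ln (2::real)" by simp
  have "- xlx t = t * ln (1 / (2*t)) / ln 2 + t"
    unfolding xlx_def log_def L using l2 by (simp add: field_simps)
  also have "\<dots> \<le> (1/2 - t) / ln 2 + t" using a by (simp add: divide_right_mono)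
  finally show ?thesis .
qed

lemma hb_le_1: assumes "0 \<le> t" "t \<le> 1" shows "hb t \<le> 1"
proof -
  have "hb t \<le> ((1/2 - t) / ln 2 + t) + ((1/2 - (1 - t)) / ln 2 + (1 - t))"
    unfolding hb_def using xlx_bound[of t] xlx_bound[of "1-t"] assms by simp
  also have "\<dots> = 1" by (simp add: field_simps)
  finally show ?thesis .
qed

definition conv :: "real \<Rightarrow> real \<Rightarrow> real" where "conv s t = s * (1 - t) + t * (1 - s)"

lemma ent_bern: "ent UNIV (bern s) (\<lambda>k. k) = hb s"
proof -
  have "ent UNIV (bern s) (\<lambda>k. k) = hb (pr UNIV (bern s) (\<lambda>k. k))"
    by (rule ent_bool) (simp add: sum_bool bern_def)
  also have "pr UNIV (bern s) (\<lambda>k. k) = s" unfolding pr_def by (simp add: sum_bool bern_def)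
  finally show ?thesis .
qed

lemma hb_conv_le:
  assumes "0 \<le> s" "s \<le> 1" "0 \<le> t" "t \<le> 1"
  shows "hb (conv s t) \<le> hb s + hb t"
proof -
  let ?P = "\<lambda>(k,x). bern s k * bern t x"
  let ?O = "(UNIV::bool set) \<times> (UNIV::bool set)"
  have nn: "\<forall>w\<in>?O. 0 \<le> ?P w" using assms by (auto simp: bern_def)
  have tot: "sum ?P ?O = 1" unfolding sum_prod_P[OF finite finite] by (simp add: sum_bool bern_def)
  have "hb (conv s t) = ent ?O ?P (\<lambda>v. fst v \<noteq> snd v)"
  proof -
    have "ent ?O ?P (\<lambda>v. fst v \<noteq> snd v) = hb (pr ?O ?P (\<lambda>v. fst v \<noteq> snd v))" by (rule ent_bool[OF tot])
    also have "pr ?O ?P (\<lambda>v. fst v \<noteq> snd v) = conv s t"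
      unfolding pr_def sum_prod_split by (simp add: sum_bool bern_def conv_def algebra_simps)
    finally show ?thesis by simp
  qed
  also have "\<dots> \<le> ent ?O ?P (\<lambda>v. v)" by (rule ent_coarse[OF _ nn]) auto
  also have "\<dots> = hb s + hb t"
  proof -
    have a: "ent ?O ?P (\<lambda>v. v) = ent UNIV (bern s) (\<lambda>k. k) + (\<Sum>k\<in>UNIV. bern s k * ent UNIV (bern t) (\<lambda>x. (k,x)))"
      by (subst ent_cell) (use assms in \<open>auto simp: bern_def sum_bool\<close>)
    have e: "\<And>k. ent UNIV (bern t) (\<lambda>x. (k,x)) = hb t"
    proof -
      fix k
      have "ent UNIV (bern t) (\<lambda>x. (k,x)) = ent UNIV (bern t) (\<lambda>x. x)" by (rule ent_cong) auto
      then show "ent UNIV (bern t) (\<lambda>x. (k,x)) = hb t" using ent_bern[of t] by simp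
    qed
    show ?thesis unfolding a e by (simp add: ent_bern sum_bool bern_def algebra_simps)
  qed
  finally show ?thesis .
qed

definition tt :: "real \<Rightarrow> real" where "tt a = 1 - 1 / (2 - a)"
definition B2 :: "(bool \<times> bool) set" where "B2 = UNIV \<times> UNIV"
definition Pw :: "real \<Rightarrow> real \<Rightarrow> bool \<times> bool \<Rightarrow> real" where
  "Pw a b c = bern (a/2) (fst c) * bern (b/2) (snd c)"
definition Pp :: "real \<Rightarrow> real \<Rightarrow> bool \<times> bool \<Rightarrow> real" where
  "Pp a b p = bern (tt a) (fst p) * bern (tt b) (snd p)"

lemma tt_range: assumes "0 \<le> a" "a \<le> 1" shows "0 \<le> tt a" "tt a \<le> 1"
proof -
  have "1 / (2 - a) \<le> 1" using assms by (simp add: divide_le_eq)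
  moreover have "0 \<le> 1 / (2 - a)" using assms by simp
  moreover have "1 / (2 - a) \<le> 1 + 1" using \<open>1 / (2 - a) \<le> 1\<close> by simp
  ultimately show "0 \<le> tt a" "tt a \<le> 1" unfolding tt_def by linarith+
qed

lemma bern_nn: "0 \<le> t \<Longrightarrow> t \<le> 1 \<Longrightarrow> 0 \<le> bern t x" by (simp add: bern_def)

lemma finB2[simp]: "finite B2" by (simp add: B2_def)

lemma sum_B2: "sum f B2 = f (False,False) + f (False,True) + f (True,False) + f (True,True)"
  unfolding B2_def sum_prod_split by (simp add: sum_bool add.assoc)

lemma pr_B2: "pr B2 P E = (if E (False,False) then P (False,False) else 0) + (if E (False,True) then P (False,True) else 0)
   + (if E (True,False) then P (True,False) else 0) + (if E (True,True) then P (True,True) else 0)"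
  unfolding pr_def sum_B2 ..

lemma pr_bool: "pr UNIV (bern t) E = (if E False then 1 - t else 0) + (if E True then t else 0)"
  unfolding pr_def sum_bool by (simp add: bern_def)

lemma Pp_split: "Pp a b = (\<lambda>(k,x). bern (tt a) k * bern (tt b) x)"
  by (auto simp: Pp_def fun_eq_iff)

lemma cmi4_fst:
  fixes Bf :: "bool \<times> bool \<Rightarrow> bool"
  assumes ab: "0 \<le> a" "a \<le> 1" "0 \<le> b" "b \<le> 1"
  shows "cmi B2 (Pp a b) (\<lambda>p. fst p) Bf (\<lambda>_. c) =
     hb (pr B2 (Pp a b) Bf) - ((1 - tt a) * hb (pr UNIV (bern (tt b)) (\<lambda>x. Bf (False,x)))
                              + tt a * hb (pr UNIV (bern (tt b)) (\<lambda>x. Bf (True,x))))"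
proof -
  have r: "0 \<le> tt a" "tt a \<le> 1" "0 \<le> tt b" "tt b \<le> 1" using tt_range ab by auto
  have "cmi B2 (Pp a b) (\<lambda>p. fst p) Bf (\<lambda>_. c) =
     hb (pr (UNIV \<times> UNIV) (\<lambda>(k,x). bern (tt a) k * bern (tt b) x) Bf) - (\<Sum>k\<in>UNIV. bern (tt a) k * hb (pr UNIV (bern (tt b)) (\<lambda>x. Bf (k,x))))"
    unfolding B2_def Pp_split
    by (rule cmi_fst) (use r in \<open>auto simp: bern_def sum_bool\<close>)
  then show ?thesis unfolding B2_def[symmetric] Pp_split[symmetric] by (simp add: sum_bool bern_def)
qed

lemma cmi4_snd:
  fixes Bf :: "bool \<times> bool \<Rightarrow> bool"
  assumes ab: "0 \<le> a" "a \<le> 1" "0 \<le> b" "b \<le> 1"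
  shows "cmi B2 (Pp a b) (\<lambda>p. snd p) Bf (\<lambda>_. c) =
     hb (pr B2 (Pp a b) Bf) - ((1 - tt b) * hb (pr UNIV (bern (tt a)) (\<lambda>x. Bf (x,False)))
                              + tt b * hb (pr UNIV (bern (tt a)) (\<lambda>x. Bf (x,True))))"
proof -
  have "cmi B2 (Pp a b) (\<lambda>p. snd p) Bf (\<lambda>_. c) = cmi B2 (Pp b a) (\<lambda>p. fst p) (\<lambda>p. Bf (prod.swap p)) (\<lambda>_. c)"
    by (rule cmi_bij[where h=prod.swap]) (auto simp: B2_def Pp_def bij_betw_def)
  also have "\<dots> = hb (pr B2 (Pp b a) (\<lambda>p. Bf (prod.swap p))) - ((1 - tt b) * hb (pr UNIV (bern (tt a)) (\<lambda>x. Bf (x,False)))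
                              + tt b * hb (pr UNIV (bern (tt a)) (\<lambda>x. Bf (x,True))))"
    by (subst cmi4_fst) (use ab in auto)
  also have "pr B2 (Pp b a) (\<lambda>p. Bf (prod.swap p)) = pr B2 (Pp a b) Bf"
    unfolding pr_B2 by (simp add: Pp_def algebra_simps)
  finally show ?thesis .
qed

definition iX1 :: "(bool \<times> bool) \<times> (bool \<times> bool) \<Rightarrow> bool" where "iX1 x = (fst (fst x) \<or> fst (snd x))"
definition iX2 :: "(bool \<times> bool) \<times> (bool \<times> bool) \<Rightarrow> bool" where "iX2 x = (snd (fst x) \<or> snd (snd x))"
definition iY1 :: "bool \<times> bool \<Rightarrow> (bool \<times> bool) \<times> (bool \<times> bool) \<Rightarrow> bool" where
  "iY1 g x = ((fst g \<and> iX1 x) \<noteq> (snd g \<and> iX2 x))"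
definition iY2 :: "bool \<times> bool \<Rightarrow> (bool \<times> bool) \<times> (bool \<times> bool) \<Rightarrow> bool" where
  "iY2 g x = ((fst g \<and> iX2 x) \<noteq> (snd g \<and> iX1 x))"

definition uu :: "real \<Rightarrow> real" where "uu a = (1 - a/2) * hb (tt a)"
definition KD :: "real \<Rightarrow> real \<Rightarrow> real" where
  "KD a b = (1 - a/2) * (1 - b/2) * (hb (tt a) + hb (tt b) - hb (conv (tt a) (tt b)))"

lemma In_A1:
  assumes ab: "0 \<le> a" "a \<le> 1" "0 \<le> b" "b \<le> 1"
  shows "cmi (B2 \<times> B2) (\<lambda>(k,x). Pw a b k * Pp a b x) (\<lambda>x. fst (snd x)) (iY1 g) (\<lambda>x. fst x)
     = (if fst g then uu a - (if snd g then KD a b else 0) else 0)"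
proof -
  have "cmi (B2 \<times> B2) (\<lambda>(k,x). Pw a b k * Pp a b x) (\<lambda>x. fst (snd x)) (iY1 g) (\<lambda>x. fst x)
     = (\<Sum>k\<in>B2. Pw a b k * cmi B2 (Pp a b) (\<lambda>p. fst p) (\<lambda>p. iY1 g (k,p)) (\<lambda>p. k))"
    by (subst cmi_cell) auto
  also have "\<dots> = (if fst g then uu a - (if snd g then KD a b else 0) else 0)"
    unfolding sum_B2
    apply (simp add: cmi4_fst[OF ab])
    apply (cases g)
    apply (auto simp: iY1_def iX1_def iX2_def pr_B2 pr_bool Pp_def bern_def hb_sym uu_def KD_def Pw_def conv_def algebra_simps)
    done
  finally show ?thesis .
qed

lemma pr_cellP:
  assumes K: "finite K"
  shows "pr (K \<times> X) (\<lambda>(k,x). Pk k * Px k x) E = (\<Sum>k\<in>K. Pk k * pr X (Px k) (\<lambda>x. E (k,x)))"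
  unfolding pr_def sum_prod_split prod.case by (simp add: sum_distrib_left if_distrib cong: if_cong)

lemma Pw_split: "Pw a b = (\<lambda>(k,x). bern (a/2) k * bern (b/2) x)"
  by (auto simp: Pw_def fun_eq_iff)

lemma pr_B2': "pr B2 (Pp a b) E = (1 - tt a) * pr UNIV (bern (tt b)) (\<lambda>x. E (False,x)) + tt a * pr UNIV (bern (tt b)) (\<lambda>x. E (True,x))"
  unfolding B2_def Pp_split pr_cellP[OF finite] sum_bool by (simp add: bern_def)

lemma pr_W: "pr B2 (Pw a b) E = (1 - a/2) * pr UNIV (bern (b/2)) (\<lambda>x. E (False,x)) + a/2 * pr UNIV (bern (b/2)) (\<lambda>x. E (True,x))"
  unfolding B2_def Pw_split pr_cellP[OF finite] sum_bool by (simp add: bern_def)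

lemma iY1_fun: "iY1 g = (\<lambda>x. (fst g \<and> iX1 x) \<noteq> (snd g \<and> iX2 x))" by (simp add: fun_eq_iff iY1_def)
lemma iY2_fun: "iY2 g = (\<lambda>x. (fst g \<and> iX2 x) \<noteq> (snd g \<and> iX1 x))" by (simp add: fun_eq_iff iY2_def)

lemma tt_half: "a \<le> 1 \<Longrightarrow> a/2 + (1 - a/2) * tt a = 1/2"
  unfolding tt_def by (simp add: field_simps)

abbreviation "PIn a b \<equiv> (\<lambda>(k,x). Pw a b k * Pp a b x)"

lemma prIn_X1: assumes "a \<le> 1" shows "pr (B2 \<times> B2) (PIn a b) iX1 = 1/2"
proof -
  have "pr (B2 \<times> B2) (PIn a b) iX1 = a/2 + (1 - a/2) * tt a"
    unfolding pr_cellP[OF finB2] sum_B2 pr_B2' pr_bool iX1_def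
    by (simp add: Pw_def bern_def algebra_simps)
  then show ?thesis using tt_half[OF assms] by simp
qed

lemma prIn_X2: assumes "b \<le> 1" shows "pr (B2 \<times> B2) (PIn a b) iX2 = 1/2"
proof -
  have "pr (B2 \<times> B2) (PIn a b) iX2 = b/2 + (1 - b/2) * tt b"
    unfolding pr_cellP[OF finB2] sum_B2 pr_B2' pr_bool iX2_def
    by (simp add: Pw_def bern_def algebra_simps)
  then show ?thesis using tt_half[OF assms] by simp
qed

lemma prIn_X12: "a \<le> 1 \<Longrightarrow> b \<le> 1 \<Longrightarrow> pr (B2 \<times> B2) (PIn a b) (\<lambda>x. iX1 x \<noteq> iX2 x) = 1/2"
proof -
  have "pr (B2 \<times> B2) (PIn a b) (\<lambda>x. iX1 x \<noteq> iX2 x) =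
     (a/2 + (1 - a/2) * tt a) * (1 - (b/2 + (1 - b/2) * tt b)) + (1 - (a/2 + (1 - a/2) * tt a)) * (b/2 + (1 - b/2) * tt b)"
    unfolding pr_cellP[OF finB2] sum_B2 pr_B2' pr_bool iX2_def iX1_def
    by (simp add: Pw_def bern_def field_simps)
  also assume "a \<le> 1" "b \<le> 1"
  then have "(a/2 + (1 - a/2) * tt a) * (1 - (b/2 + (1 - b/2) * tt b)) + (1 - (a/2 + (1 - a/2) * tt a)) * (b/2 + (1 - b/2) * tt b) = 1/2"
    by (simp add: tt_half)
  finally show ?thesis .
qed

lemma prIn_X12': "a \<le> 1 \<Longrightarrow> b \<le> 1 \<Longrightarrow> pr (B2 \<times> B2) (PIn a b) (\<lambda>x. iX1 x = (\<not> iX2 x)) = 1/2"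
  using prIn_X12[of a b] by (subst pr_cong[where E'="\<lambda>x. iX1 x \<noteq> iX2 x" and P'="PIn a b"]) auto

lemma prIn_X21': "a \<le> 1 \<Longrightarrow> b \<le> 1 \<Longrightarrow> pr (B2 \<times> B2) (PIn a b) (\<lambda>x. iX2 x = (\<not> iX1 x)) = 1/2"
  using prIn_X12[of a b] by (subst pr_cong[where E'="\<lambda>x. iX1 x \<noteq> iX2 x" and P'="PIn a b"]) auto

lemma pr_False[simp]: "pr Om P (\<lambda>x. False) = 0" by (simp add: pr_def)

lemma In_S1:
  assumes ab: "0 \<le> a" "a \<le> 1" "0 \<le> b" "b \<le> 1"
  shows "cmi (B2 \<times> B2) (\<lambda>(k,x). Pw a b k * Pp a b x) (\<lambda>x. fst x) (iY1 g) (\<lambda>_. c)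
     = (if fst g \<and> snd g then 1 - uu a - uu b + KD a b else if fst g then 1 - uu a else if snd g then 1 - uu b else 0)"
proof -
  have r: "0 \<le> tt a" "tt a \<le> 1" "0 \<le> tt b" "tt b \<le> 1" using tt_range ab by auto
  have "cmi (B2 \<times> B2) (\<lambda>(k,x). Pw a b k * Pp a b x) (\<lambda>x. fst x) (iY1 g) (\<lambda>_. c)
     = hb (pr (B2 \<times> B2) (\<lambda>(k,x). Pw a b k * Pp a b x) (iY1 g)) - (\<Sum>k\<in>B2. Pw a b k * hb (pr B2 (Pp a b) (\<lambda>x. iY1 g (k,x))))"
    by (rule cmi_fst) (use ab r in \<open>auto simp: sum_B2 Pw_def Pp_def bern_def algebra_simps\<close>)
  also have "\<dots> = (if fst g \<and> snd g then 1 - uu a - uu b + KD a b else if fst g then 1 - uu a else if snd g then 1 - uu b else 0)"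
    apply (cases g)
    apply (auto simp: iY1_fun prIn_X1 prIn_X2 prIn_X12' ab hb_half)
    apply (auto simp: sum_B2 iX1_def iX2_def pr_B2' pr_W pr_bool Pp_def bern_def hb_sym uu_def KD_def Pw_def conv_def field_simps)
    done
  finally show ?thesis .
qed

lemma In_A2:
  assumes ab: "0 \<le> a" "a \<le> 1" "0 \<le> b" "b \<le> 1"
  shows "cmi (B2 \<times> B2) (\<lambda>(k,x). Pw a b k * Pp a b x) (\<lambda>x. snd (snd x)) (iY2 g) (\<lambda>x. fst x)
     = (if fst g then uu b - (if snd g then KD a b else 0) else 0)"
proof -
  have "cmi (B2 \<times> B2) (\<lambda>(k,x). Pw a b k * Pp a b x) (\<lambda>x. snd (snd x)) (iY2 g) (\<lambda>x. fst x)
     = (\<Sum>k\<in>B2. Pw a b k * cmi B2 (Pp a b) (\<lambda>p. snd p) (\<lambda>p. iY2 g (k,p)) (\<lambda>p. k))"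
    by (subst cmi_cell) auto
  also have "\<dots> = (if fst g then uu b - (if snd g then KD a b else 0) else 0)"
    unfolding sum_B2
    apply (simp add: cmi4_snd[OF ab])
    apply (cases g)
    apply (auto simp: iY2_def iX1_def iX2_def pr_B2 pr_bool Pp_def bern_def hb_sym uu_def KD_def Pw_def conv_def field_simps)
    done
  finally show ?thesis .
qed

lemma In_S2:
  assumes ab: "0 \<le> a" "a \<le> 1" "0 \<le> b" "b \<le> 1"
  shows "cmi (B2 \<times> B2) (\<lambda>(k,x). Pw a b k * Pp a b x) (\<lambda>x. fst x) (iY2 g) (\<lambda>_. c)
     = (if fst g \<and> snd g then 1 - uu a - uu b + KD a b else if fst g then 1 - uu b else if snd g then 1 - uu a else 0)"
proof -
  have r: "0 \<le> tt a" "tt a \<le> 1" "0 \<le> tt b" "tt b \<le> 1" using tt_range ab by auto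
  have "cmi (B2 \<times> B2) (\<lambda>(k,x). Pw a b k * Pp a b x) (\<lambda>x. fst x) (iY2 g) (\<lambda>_. c)
     = hb (pr (B2 \<times> B2) (\<lambda>(k,x). Pw a b k * Pp a b x) (iY2 g)) - (\<Sum>k\<in>B2. Pw a b k * hb (pr B2 (Pp a b) (\<lambda>x. iY2 g (k,x))))"
    by (rule cmi_fst) (use ab r in \<open>auto simp: sum_B2 Pw_def Pp_def bern_def algebra_simps\<close>)
  also have "\<dots> = (if fst g \<and> snd g then 1 - uu a - uu b + KD a b else if fst g then 1 - uu b else if snd g then 1 - uu a else 0)"
    apply (cases g)
    apply (auto simp: iY2_fun prIn_X1 prIn_X2 prIn_X21' ab hb_half)
    apply (auto simp: sum_B2 iX1_def iX2_def pr_B2' pr_W pr_bool Pp_def bern_def hb_sym uu_def KD_def Pw_def conv_def field_simps)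
    done
  finally show ?thesis .
qed

abbreviation "Q2 a b \<equiv> (\<lambda>(c1,p). bern (a/2) c1 * Pp a b p)"
abbreviation "Q1 a b \<equiv> (\<lambda>(c2,p). bern (b/2) c2 * Pp a b p)"

lemma In_c2:
  fixes Y :: "(bool \<times> bool) \<times> (bool \<times> bool) \<Rightarrow> bool"
  assumes ab: "0 \<le> a" "a \<le> 1" "0 \<le> b" "b \<le> 1"
  shows "cmi (B2 \<times> B2) (\<lambda>(k,x). Pw a b k * Pp a b x) (\<lambda>x. fst (fst x)) Y (\<lambda>x. snd (fst x))
    = (\<Sum>c2\<in>UNIV. bern (b/2) c2 * (hb (pr (UNIV \<times> B2) (Q2 a b) (\<lambda>v. Y ((fst v, c2), snd v)))
         - (\<Sum>c1\<in>UNIV. bern (a/2) c1 * hb (pr B2 (Pp a b) (\<lambda>p. Y ((c1,c2),p))))))"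
proof -
  have r: "0 \<le> tt a" "tt a \<le> 1" "0 \<le> tt b" "tt b \<le> 1" using tt_range ab by auto
  have "cmi (B2 \<times> B2) (\<lambda>(k,x). Pw a b k * Pp a b x) (\<lambda>x. fst (fst x)) Y (\<lambda>x. snd (fst x))
     = cmi (UNIV \<times> (UNIV \<times> B2)) (\<lambda>(k,x). bern (b/2) k * Q2 a b x) (\<lambda>v. fst (snd v))
          (\<lambda>v. Y ((fst (snd v), fst v), snd (snd v))) (\<lambda>v. fst v)"
    apply (rule cmi_bij[where h="\<lambda>((c1,c2),p). (c2,(c1,p))"])
      apply (simp add: B2_def)
     apply (rule bij_betw_byWitness[where f'="\<lambda>(c2,(c1,p)). ((c1,c2),p)"])
        apply (auto simp: B2_def Pw_def)
    done
  also have "\<dots> = (\<Sum>c2\<in>UNIV. bern (b/2) c2 * cmi (UNIV \<times> B2) (Q2 a b) (\<lambda>v. fst v) (\<lambda>v. Y ((fst v, c2), snd v)) (\<lambda>v. c2))"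
    by (subst cmi_cell) auto
  also have "\<dots> = (\<Sum>c2\<in>UNIV. bern (b/2) c2 * (hb (pr (UNIV \<times> B2) (Q2 a b) (\<lambda>v. Y ((fst v, c2), snd v)))
         - (\<Sum>c1\<in>UNIV. bern (a/2) c1 * hb (pr B2 (Pp a b) (\<lambda>p. Y ((c1,c2),p))))))"
  proof (rule sum.cong[OF refl])
    fix c2
    have "cmi (UNIV \<times> B2) (Q2 a b) (\<lambda>v. fst v) (\<lambda>v. Y ((fst v, c2), snd v)) (\<lambda>v. c2)
      = hb (pr (UNIV \<times> B2) (Q2 a b) (\<lambda>v. Y ((fst v, c2), snd v)))
         - (\<Sum>c1\<in>UNIV. bern (a/2) c1 * hb (pr B2 (Pp a b) (\<lambda>p. Y ((c1,c2),p))))"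
      by (subst cmi_fst) (use ab r in \<open>auto simp: sum_B2 sum_bool Pp_def bern_def algebra_simps\<close>)
    then show "bern (b/2) c2 * cmi (UNIV \<times> B2) (Q2 a b) (\<lambda>v. fst v) (\<lambda>v. Y ((fst v, c2), snd v)) (\<lambda>v. c2) =
      bern (b/2) c2 * (hb (pr (UNIV \<times> B2) (Q2 a b) (\<lambda>v. Y ((fst v, c2), snd v)))
         - (\<Sum>c1\<in>UNIV. bern (a/2) c1 * hb (pr B2 (Pp a b) (\<lambda>p. Y ((c1,c2),p)))))" by simp
  qed
  finally show ?thesis .
qed

lemma In_c1:
  fixes Y :: "(bool \<times> bool) \<times> (bool \<times> bool) \<Rightarrow> bool"
  assumes ab: "0 \<le> a" "a \<le> 1" "0 \<le> b" "b \<le> 1"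
  shows "cmi (B2 \<times> B2) (\<lambda>(k,x). Pw a b k * Pp a b x) (\<lambda>x. snd (fst x)) Y (\<lambda>x. fst (fst x))
    = (\<Sum>c1\<in>UNIV. bern (a/2) c1 * (hb (pr (UNIV \<times> B2) (Q1 a b) (\<lambda>v. Y ((c1, fst v), snd v)))
         - (\<Sum>c2\<in>UNIV. bern (b/2) c2 * hb (pr B2 (Pp a b) (\<lambda>p. Y ((c1,c2),p))))))"
proof -
  have r: "0 \<le> tt a" "tt a \<le> 1" "0 \<le> tt b" "tt b \<le> 1" using tt_range ab by auto
  have "cmi (B2 \<times> B2) (\<lambda>(k,x). Pw a b k * Pp a b x) (\<lambda>x. snd (fst x)) Y (\<lambda>x. fst (fst x))
     = cmi (UNIV \<times> (UNIV \<times> B2)) (\<lambda>(k,x). bern (a/2) k * Q1 a b x) (\<lambda>v. fst (snd v))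
          (\<lambda>v. Y ((fst v, fst (snd v)), snd (snd v))) (\<lambda>v. fst v)"
    apply (rule cmi_bij[where h="\<lambda>((c1,c2),p). (c1,(c2,p))"])
      apply (simp add: B2_def)
     apply (rule bij_betw_byWitness[where f'="\<lambda>(c1,(c2,p)). ((c1,c2),p)"])
        apply (auto simp: B2_def Pw_def)
    done
  also have "\<dots> = (\<Sum>c1\<in>UNIV. bern (a/2) c1 * cmi (UNIV \<times> B2) (Q1 a b) (\<lambda>v. fst v) (\<lambda>v. Y ((c1, fst v), snd v)) (\<lambda>v. c1))"
    by (subst cmi_cell) auto
  also have "\<dots> = (\<Sum>c1\<in>UNIV. bern (a/2) c1 * (hb (pr (UNIV \<times> B2) (Q1 a b) (\<lambda>v. Y ((c1, fst v), snd v)))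
         - (\<Sum>c2\<in>UNIV. bern (b/2) c2 * hb (pr B2 (Pp a b) (\<lambda>p. Y ((c1,c2),p))))))"
  proof (rule sum.cong[OF refl])
    fix c1
    have "cmi (UNIV \<times> B2) (Q1 a b) (\<lambda>v. fst v) (\<lambda>v. Y ((c1, fst v), snd v)) (\<lambda>v. c1)
      = hb (pr (UNIV \<times> B2) (Q1 a b) (\<lambda>v. Y ((c1, fst v), snd v)))
         - (\<Sum>c2\<in>UNIV. bern (b/2) c2 * hb (pr B2 (Pp a b) (\<lambda>p. Y ((c1,c2),p))))"
      by (subst cmi_fst) (use ab r in \<open>auto simp: sum_B2 sum_bool Pp_def bern_def algebra_simps\<close>)
    then show "bern (a/2) c1 * cmi (UNIV \<times> B2) (Q1 a b) (\<lambda>v. fst v) (\<lambda>v. Y ((c1, fst v), snd v)) (\<lambda>v. c1) =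
      bern (a/2) c1 * (hb (pr (UNIV \<times> B2) (Q1 a b) (\<lambda>v. Y ((c1, fst v), snd v)))
         - (\<Sum>c2\<in>UNIV. bern (b/2) c2 * hb (pr B2 (Pp a b) (\<lambda>p. Y ((c1,c2),p)))))" by simp
  qed
  finally show ?thesis .
qed

lemma pc2_X1: assumes "a \<le> 1" shows "pr (UNIV \<times> B2) (Q2 a b) (\<lambda>v. iX1 ((fst v, c), snd v)) = 1/2"
proof -
  have "pr (UNIV \<times> B2) (Q2 a b) (\<lambda>v. iX1 ((fst v, c), snd v)) = a/2 + (1 - a/2) * tt a"
    unfolding pr_cellP[OF finite] sum_bool pr_B2' pr_bool iX1_def by (simp add: bern_def field_simps)
  then show ?thesis using tt_half[OF assms] by simp
qed

lemma pc2_X2: "pr (UNIV \<times> B2) (Q2 a b) (\<lambda>v. iX2 ((fst v, c), snd v)) = (if c then 1 else tt b)"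
  unfolding pr_cellP[OF finite] sum_bool pr_B2' pr_bool iX2_def by (cases c) (simp_all add: bern_def field_simps)

lemma pc2_X12: assumes "a \<le> 1" shows "pr (UNIV \<times> B2) (Q2 a b) (\<lambda>v. iX1 ((fst v, c), snd v) = (\<not> iX2 ((fst v, c), snd v))) = 1/2"
proof -
  define q where "q = (if c then 1 else tt b)"
  have e: "pr (UNIV \<times> B2) (Q2 a b) (\<lambda>v. iX1 ((fst v, c), snd v) = (\<not> iX2 ((fst v, c), snd v)))
      = (a/2 + (1 - a/2) * tt a) * (1 - q) + (1 - (a/2 + (1 - a/2) * tt a)) * q"
    unfolding pr_cellP[OF finite] sum_bool pr_B2' pr_bool iX1_def iX2_def q_def
    by (cases c) (simp_all add: bern_def field_simps)
  show ?thesis unfolding e tt_half[OF assms] by (simp add: field_simps)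
qed

lemma pc2_X21: assumes "a \<le> 1" shows "pr (UNIV \<times> B2) (Q2 a b) (\<lambda>v. iX2 ((fst v, c), snd v) = (\<not> iX1 ((fst v, c), snd v))) = 1/2"
  using pc2_X12[OF assms, of b c] by (subst pr_cong[where E'="\<lambda>v. iX1 ((fst v, c), snd v) = (\<not> iX2 ((fst v, c), snd v))" and P'="Q2 a b"]) auto

lemma pc1_X2: assumes "b \<le> 1" shows "pr (UNIV \<times> B2) (Q1 a b) (\<lambda>v. iX2 ((c, fst v), snd v)) = 1/2"
proof -
  have "pr (UNIV \<times> B2) (Q1 a b) (\<lambda>v. iX2 ((c, fst v), snd v)) = b/2 + (1 - b/2) * tt b"
    unfolding pr_cellP[OF finite] sum_bool pr_B2' pr_bool iX2_def by (simp add: bern_def field_simps)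
  then show ?thesis using tt_half[OF assms] by simp
qed

lemma pc1_X1: "pr (UNIV \<times> B2) (Q1 a b) (\<lambda>v. iX1 ((c, fst v), snd v)) = (if c then 1 else tt a)"
  unfolding pr_cellP[OF finite] sum_bool pr_B2' pr_bool iX1_def by (cases c) (simp_all add: bern_def field_simps)

lemma pc1_X12: assumes "b \<le> 1" shows "pr (UNIV \<times> B2) (Q1 a b) (\<lambda>v. iX1 ((c, fst v), snd v) = (\<not> iX2 ((c, fst v), snd v))) = 1/2"
proof -
  define q where "q = (if c then 1 else tt a)"
  have e: "pr (UNIV \<times> B2) (Q1 a b) (\<lambda>v. iX1 ((c, fst v), snd v) = (\<not> iX2 ((c, fst v), snd v)))
      = (b/2 + (1 - b/2) * tt b) * (1 - q) + (1 - (b/2 + (1 - b/2) * tt b)) * q"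
    unfolding pr_cellP[OF finite] sum_bool pr_B2' pr_bool iX1_def iX2_def q_def
    by (cases c) (simp_all add: bern_def field_simps)
  show ?thesis unfolding e tt_half[OF assms] by (simp add: field_simps)
qed

lemma pc1_X21: assumes "b \<le> 1" shows "pr (UNIV \<times> B2) (Q1 a b) (\<lambda>v. iX2 ((c, fst v), snd v) = (\<not> iX1 ((c, fst v), snd v))) = 1/2"
  using pc1_X12[OF assms, of a c] by (subst pr_cong[where E'="\<lambda>v. iX1 ((c, fst v), snd v) = (\<not> iX2 ((c, fst v), snd v))" and P'="Q1 a b"]) auto

lemmas pc_simps = pc2_X1 pc2_X2 pc2_X12 pc2_X21 pc1_X1 pc1_X2 pc1_X12 pc1_X21

lemma In_a1:
  assumes ab: "0 \<le> a" "a \<le> 1" "0 \<le> b" "b \<le> 1"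
  shows "cmi (B2 \<times> B2) (\<lambda>(k,x). Pw a b k * Pp a b x) (\<lambda>x. fst (fst x)) (iY1 g) (\<lambda>x. snd (fst x))
     = (if fst g \<and> snd g then 1 - uu a - uu b + KD a b else if fst g then 1 - uu a else 0)"
proof -
  obtain g1 g2 where g: "g = (g1,g2)" by (cases g)
  show ?thesis unfolding In_c2[OF ab] g
    by (cases g1; cases g2; (simp add: sum_bool iY1_fun pc_simps ab hb_half)?;
        (auto simp: iX1_def iX2_def pr_B2' pr_bool bern_def hb_sym uu_def KD_def conv_def field_simps)?)
qed

lemma In_a2:
  assumes ab: "0 \<le> a" "a \<le> 1" "0 \<le> b" "b \<le> 1"
  shows "cmi (B2 \<times> B2) (\<lambda>(k,x). Pw a b k * Pp a b x) (\<lambda>x. fst (fst x)) (iY2 g) (\<lambda>x. snd (fst x))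
     = (if fst g \<and> snd g then 1 - uu a - uu b + KD a b else if snd g then 1 - uu a else 0)"
proof -
  obtain g1 g2 where g: "g = (g1,g2)" by (cases g)
  show ?thesis unfolding In_c2[OF ab] g
    by (cases g1; cases g2; (simp add: sum_bool iY2_fun pc_simps ab hb_half)?;
        (auto simp: iX1_def iX2_def pr_B2' pr_bool bern_def hb_sym uu_def KD_def conv_def field_simps)?)
qed

lemma In_b1:
  assumes ab: "0 \<le> a" "a \<le> 1" "0 \<le> b" "b \<le> 1"
  shows "cmi (B2 \<times> B2) (\<lambda>(k,x). Pw a b k * Pp a b x) (\<lambda>x. snd (fst x)) (iY1 g) (\<lambda>x. fst (fst x))
     = (if fst g \<and> snd g then 1 - uu a - uu b + KD a b else if snd g then 1 - uu b else 0)"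
proof -
  obtain g1 g2 where g: "g = (g1,g2)" by (cases g)
  show ?thesis unfolding In_c1[OF ab] g
    by (cases g1; cases g2; (simp add: sum_bool iY1_fun pc_simps ab hb_half)?;
        (auto simp: iX1_def iX2_def pr_B2' pr_bool bern_def hb_sym uu_def KD_def conv_def field_simps)?)
qed

lemma In_b2:
  assumes ab: "0 \<le> a" "a \<le> 1" "0 \<le> b" "b \<le> 1"
  shows "cmi (B2 \<times> B2) (\<lambda>(k,x). Pw a b k * Pp a b x) (\<lambda>x. snd (fst x)) (iY2 g) (\<lambda>x. fst (fst x))
     = (if fst g \<and> snd g then 1 - uu a - uu b + KD a b else if fst g then 1 - uu b else 0)"
proof -
  obtain g1 g2 where g: "g = (g1,g2)" by (cases g)
  show ?thesis unfolding In_c1[OF ab] g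
    by (cases g1; cases g2; (simp add: sum_bool iY2_fun pc_simps ab hb_half)?;
        (auto simp: iX1_def iX2_def pr_B2' pr_bool bern_def hb_sym uu_def KD_def conv_def field_simps)?)
qed

definition KQ :: "(nat \<times> (bool \<times> bool)) set" where "KQ = {1,2} \<times> B2"
definition Pk :: "real \<Rightarrow> real \<Rightarrow> nat \<times> (bool \<times> bool) \<Rightarrow> real" where
  "Pk pd pc k = 1/2 * bern pd (fst (snd k)) * bern pc (snd (snd k))"
definition dA :: "real \<Rightarrow> real \<Rightarrow> nat \<Rightarrow> real" where "dA d1 d2 q = (if q = 1 then d1 else d2)"
definition dB :: "real \<Rightarrow> real \<Rightarrow> nat \<Rightarrow> real" where "dB d1 d2 q = (if q = 1 then d2 else d1)"

definition inp :: "outcome \<Rightarrow> (bool \<times> bool) \<times> (bool \<times> bool)" where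
  "inp w = ((oX1c w, oX2c w), (oX1p w, oX2p w))"
definition pi1 :: "outcome \<Rightarrow> (nat \<times> (bool \<times> bool)) \<times> ((bool \<times> bool) \<times> (bool \<times> bool))" where
  "pi1 w = ((oQ w, oGv1 w), inp w)"
definition pi2 :: "outcome \<Rightarrow> (nat \<times> (bool \<times> bool)) \<times> ((bool \<times> bool) \<times> (bool \<times> bool))" where
  "pi2 w = ((oQ w, oGv2 w), inp w)"

abbreviation "PN pd pc d1 d2 \<equiv> (\<lambda>(k,x). Pk pd pc k * PIn (dA d1 d2 (fst k)) (dB d1 d2 (fst k)) x)"

lemma sum_UNIV_pair: "sum f (UNIV :: (bool \<times> bool) set) = f (False,False) + f (False,True) + f (True,False) + f (True,True)"
  using sum_B2[of f] by (simp add: B2_def)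

lemma fiber1:
  assumes y: "y \<in> KQ \<times> (B2 \<times> B2)"
  shows "PN pd pc d1 d2 y = (\<Sum>w\<in>{w\<in>Omega. pi1 w = y}. joint pd pc d1 d2 w)"
proof -
  obtain q g1 g2 c1 c2 p1 p2 where yy: "y = ((q,(g1,g2)),((c1,c2),(p1,p2)))" by (cases y) auto
  have q: "q = 1 \<or> q = 2" using y yy by (auto simp: KQ_def)
  have S: "{w\<in>Omega. pi1 w = y} = (\<lambda>(g3,g4). (q,c1,p1,c2,p2,g1,g2,g3,g4)) ` UNIV"
    using q unfolding yy by (auto simp: Omega_def pi1_def inp_def oQ_def oGv1_def oG11_def oG21_def
      oX1c_def oX2c_def oX1p_def oX2p_def image_iff)
  have inj: "inj_on (\<lambda>(g3,g4). (q,c1,p1,c2,p2,g1,g2,g3::bool,g4::bool)) UNIV" by (auto simp: inj_on_def)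
  show ?thesis unfolding S sum.reindex[OF inj] sum_UNIV_pair
    using q unfolding yy
    by (auto simp: joint_def Let_def oQ_def oX1c_def oX1p_def oX2c_def oX2p_def oG11_def oG21_def oG22_def oG12_def
       Pk_def Pw_def Pp_def tt_def dA_def dB_def bern_def field_simps)
qed

lemma fiber2:
  assumes y: "y \<in> KQ \<times> (B2 \<times> B2)"
  shows "PN pd pc d1 d2 y = (\<Sum>w\<in>{w\<in>Omega. pi2 w = y}. joint pd pc d1 d2 w)"
proof -
  obtain q g1 g2 c1 c2 p1 p2 where yy: "y = ((q,(g1,g2)),((c1,c2),(p1,p2)))" by (cases y) auto
  have q: "q = 1 \<or> q = 2" using y yy by (auto simp: KQ_def)
  have S: "{w\<in>Omega. pi2 w = y} = (\<lambda>(g3,g4). (q,c1,p1,c2,p2,g3,g4,g1,g2)) ` UNIV"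
    using q unfolding yy by (auto simp: Omega_def pi2_def inp_def oQ_def oGv2_def oG22_def oG12_def
      oX1c_def oX2c_def oX1p_def oX2p_def image_iff)
  have inj: "inj_on (\<lambda>(g3,g4). (q,c1,p1,c2,p2,g3::bool,g4::bool,g1,g2)) UNIV" by (auto simp: inj_on_def)
  show ?thesis unfolding S sum.reindex[OF inj] sum_UNIV_pair
    using q unfolding yy
    by (auto simp: joint_def Let_def oQ_def oX1c_def oX1p_def oX2c_def oX2p_def oG11_def oG21_def oG22_def oG12_def
       Pk_def Pw_def Pp_def tt_def dA_def dB_def bern_def field_simps)
qed

lemma finOmega: "finite Omega" by (simp add: Omega_def)

lemma Omega_cmi:
  assumes pj: "pj = pi1 \<or> pj = pi2"
    and eq: "\<And>w. w \<in> Omega \<Longrightarrow> A w = AN (pj w) \<and> B w = BN (pj w) \<and> C w = CN (pj w)"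
    and det: "\<And>k x k' x'. CN (k',x') = CN (k,x) \<Longrightarrow> k' = k"
  shows "cmi Omega (joint pd pc d1 d2) A B C =
     (\<Sum>k\<in>KQ. Pk pd pc k * cmi (B2 \<times> B2) (PIn (dA d1 d2 (fst k)) (dB d1 d2 (fst k)))
        (\<lambda>x. AN (k,x)) (\<lambda>x. BN (k,x)) (\<lambda>x. CN (k,x)))"
proof -
  have "cmi Omega (joint pd pc d1 d2) A B C = cmi (KQ \<times> (B2 \<times> B2)) (PN pd pc d1 d2) AN BN CN"
  proof (rule cmi_push[where \<pi>=pj])
    show "finite Omega" by (rule finOmega)
    show "finite (KQ \<times> (B2 \<times> B2))" by (simp add: KQ_def)
    show "pj ` Omega \<subseteq> KQ \<times> (B2 \<times> B2)" using pj
      by (auto simp: Omega_def pi1_def pi2_def KQ_def B2_def oQ_def)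
    show "\<And>y. y \<in> KQ \<times> (B2 \<times> B2) \<Longrightarrow> PN pd pc d1 d2 y = (\<Sum>w\<in>{w\<in>Omega. pj w = y}. joint pd pc d1 d2 w)"
      using pj fiber1 fiber2 by blast
  qed (rule eq)
  also have "\<dots> = (\<Sum>k\<in>KQ. Pk pd pc k * cmi (B2 \<times> B2) (PIn (dA d1 d2 (fst k)) (dB d1 d2 (fst k)))
        (\<lambda>x. AN (k,x)) (\<lambda>x. BN (k,x)) (\<lambda>x. CN (k,x)))"
    apply (rule cmi_cell)
     apply (simp add: KQ_def)
    using det by blast
  finally show ?thesis .
qed

lemma sum_KQ: "sum f KQ = f (1,(False,False)) + f (1,(False,True)) + f (1,(True,False)) + f (1,(True,True))
   + f (2,(False,False)) + f (2,(False,True)) + f (2,(True,False)) + f (2,(True,True))"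
  unfolding KQ_def sum_prod_split sum_B2 by (simp add: add.assoc)

definition UU :: "real \<Rightarrow> real \<Rightarrow> real" where "UU d1 d2 = (uu d1 + uu d2) / 2"

lemma KD_sym: "KD a b = KD b a"
  unfolding KD_def conv_def by (simp add: algebra_simps)

lemma dAB_range: assumes "0 \<le> d1" "d1 \<le> 1" "0 \<le> d2" "d2 \<le> 1"
  shows "0 \<le> dA d1 d2 q" "dA d1 d2 q \<le> 1" "0 \<le> dB d1 d2 q" "dB d1 d2 q \<le> 1"
  using assms by (auto simp: dA_def dB_def)

lemma cmi_C_cong: "(\<And>v w. v \<in> Om \<Longrightarrow> w \<in> Om \<Longrightarrow> (C v = C w) = (C' v = C' w)) \<Longrightarrow> cmi Om P A B C = cmi Om P A B C'"
  by (rule cmi_cong) auto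

lemma Om_A1:
  assumes d: "0 \<le> d1" "d1 \<le> 1" "0 \<le> d2" "d2 \<le> 1"
  shows "cmi Omega (joint pd pc d1 d2) oX1p oY1 (\<lambda>w. (oX1c w, oX2c w, oQ w, oGv1 w)) = pd * UU d1 d2 - pd * pc * KD d1 d2"
proof -
  have "cmi Omega (joint pd pc d1 d2) oX1p oY1 (\<lambda>w. (oX1c w, oX2c w, oQ w, oGv1 w)) =
     (\<Sum>k\<in>KQ. Pk pd pc k * cmi (B2 \<times> B2) (PIn (dA d1 d2 (fst k)) (dB d1 d2 (fst k)))
        (\<lambda>x. fst (snd x)) (\<lambda>x. iY1 (snd k) x) (\<lambda>x. (fst (fst x), snd (fst x), fst k, snd k)))"
    apply (rule trans[OF Omega_cmi[where pj=pi1 and AN="\<lambda>(k,x). fst (snd x)" and BN="\<lambda>(k,x). iY1 (snd k) x"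
        and CN="\<lambda>(k,x). (fst (fst x), snd (fst x), fst k, snd k)"]])
    apply (auto simp: pi1_def inp_def iY1_def iX1_def iX2_def oY1_def oX1_def oX2_def oGv1_def)
    done
  also have "\<dots> = (\<Sum>k\<in>KQ. Pk pd pc k * (if fst (snd k) then uu (dA d1 d2 (fst k)) - (if snd (snd k) then KD (dA d1 d2 (fst k)) (dB d1 d2 (fst k)) else 0) else 0))"
  proof (rule sum.cong[OF refl])
    fix k assume "k \<in> KQ"
    have "cmi (B2 \<times> B2) (PIn (dA d1 d2 (fst k)) (dB d1 d2 (fst k)))
        (\<lambda>x. fst (snd x)) (\<lambda>x. iY1 (snd k) x) (\<lambda>x. (fst (fst x), snd (fst x), fst k, snd k))
      = cmi (B2 \<times> B2) (PIn (dA d1 d2 (fst k)) (dB d1 d2 (fst k))) (\<lambda>x. fst (snd x)) (iY1 (snd k)) (\<lambda>x. fst x)"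
      by (rule cmi_C_cong) auto
    also have "\<dots> = (if fst (snd k) then uu (dA d1 d2 (fst k)) - (if snd (snd k) then KD (dA d1 d2 (fst k)) (dB d1 d2 (fst k)) else 0) else 0)"
      by (rule In_A1) (rule dAB_range[OF d])+
    finally show "Pk pd pc k * cmi (B2 \<times> B2) (PIn (dA d1 d2 (fst k)) (dB d1 d2 (fst k)))
        (\<lambda>x. fst (snd x)) (\<lambda>x. iY1 (snd k) x) (\<lambda>x. (fst (fst x), snd (fst x), fst k, snd k)) =
      Pk pd pc k * (if fst (snd k) then uu (dA d1 d2 (fst k)) - (if snd (snd k) then KD (dA d1 d2 (fst k)) (dB d1 d2 (fst k)) else 0) else 0)"
      by simp
  qed
  also have "\<dots> = pd * UU d1 d2 - pd * pc * KD d1 d2"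
    unfolding sum_KQ by (simp add: Pk_def dA_def dB_def bern_def UU_def KD_sym[of d2 d1] field_simps)
  finally show ?thesis .
qed

lemma Om_A2:
  assumes d: "0 \<le> d1" "d1 \<le> 1" "0 \<le> d2" "d2 \<le> 1"
  shows "cmi Omega (joint pd pc d1 d2) oX2p oY2 (\<lambda>w. (oX1c w, oX2c w, oQ w, oGv2 w)) = pd * UU d1 d2 - pd * pc * KD d1 d2"
proof -
  have "cmi Omega (joint pd pc d1 d2) oX2p oY2 (\<lambda>w. (oX1c w, oX2c w, oQ w, oGv2 w)) =
     (\<Sum>k\<in>KQ. Pk pd pc k * cmi (B2 \<times> B2) (PIn (dA d1 d2 (fst k)) (dB d1 d2 (fst k))) (\<lambda>x. snd (snd x)) (\<lambda>x. iY2 (snd k) x) (\<lambda>x. (fst (fst x), snd (fst x), fst k, snd k)))"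
    apply (rule trans[OF Omega_cmi[where pj=pi2 and AN="\<lambda>(k,x). snd (snd x)" and BN="\<lambda>(k,x). iY2 (snd k) x"
        and CN="\<lambda>(k,x). (fst (fst x), snd (fst x), fst k, snd k)"]])
    apply (auto simp: pi2_def inp_def iY2_def iX1_def iX2_def oY2_def oX1_def oX2_def oGv2_def)
    done
  also have "\<dots> = (\<Sum>k\<in>KQ. Pk pd pc k * (if fst (snd k) then uu (dB d1 d2 (fst k)) - (if snd (snd k) then KD (dA d1 d2 (fst k)) (dB d1 d2 (fst k)) else 0) else 0))"
  proof (rule sum.cong[OF refl])
    fix k assume "k \<in> KQ"
    have "cmi (B2 \<times> B2) (PIn (dA d1 d2 (fst k)) (dB d1 d2 (fst k))) (\<lambda>x. snd (snd x)) (\<lambda>x. iY2 (snd k) x) (\<lambda>x. (fst (fst x), snd (fst x), fst k, snd k))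
      = cmi (B2 \<times> B2) (PIn (dA d1 d2 (fst k)) (dB d1 d2 (fst k))) (\<lambda>x. snd (snd x)) (iY2 (snd k)) (\<lambda>x. fst x)"
      by (rule cmi_C_cong) auto
    also have "\<dots> = (if fst (snd k) then uu (dB d1 d2 (fst k)) - (if snd (snd k) then KD (dA d1 d2 (fst k)) (dB d1 d2 (fst k)) else 0) else 0)"
      by (rule In_A2) (rule dAB_range[OF d])+
    finally show "Pk pd pc k * cmi (B2 \<times> B2) (PIn (dA d1 d2 (fst k)) (dB d1 d2 (fst k))) (\<lambda>x. snd (snd x)) (\<lambda>x. iY2 (snd k) x) (\<lambda>x. (fst (fst x), snd (fst x), fst k, snd k)) = Pk pd pc k * (if fst (snd k) then uu (dB d1 d2 (fst k)) - (if snd (snd k) then KD (dA d1 d2 (fst k)) (dB d1 d2 (fst k)) else 0) else 0)"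
      by simp
  qed
  also have "\<dots> = pd * UU d1 d2 - pd * pc * KD d1 d2"
    unfolding sum_KQ by (simp add: Pk_def dA_def dB_def bern_def UU_def KD_sym[of d2 d1] field_simps)
  finally show ?thesis .
qed

lemma Om_S1:
  assumes d: "0 \<le> d1" "d1 \<le> 1" "0 \<le> d2" "d2 \<le> 1"
  shows "cmi Omega (joint pd pc d1 d2) (\<lambda>w. (oX1c w, oX2c w)) oY1 (\<lambda>w. (oQ w, oGv1 w)) = (pd + pc - pd * pc) - (pd + pc) * UU d1 d2 + pd * pc * KD d1 d2"
proof -
  have "cmi Omega (joint pd pc d1 d2) (\<lambda>w. (oX1c w, oX2c w)) oY1 (\<lambda>w. (oQ w, oGv1 w)) =
     (\<Sum>k\<in>KQ. Pk pd pc k * cmi (B2 \<times> B2) (PIn (dA d1 d2 (fst k)) (dB d1 d2 (fst k))) (\<lambda>x. fst x) (\<lambda>x. iY1 (snd k) x) (\<lambda>x. k))"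
    apply (rule trans[OF Omega_cmi[where pj=pi1 and AN="\<lambda>(k,x). fst x" and BN="\<lambda>(k,x). iY1 (snd k) x"
        and CN="\<lambda>(k,x). k"]])
    apply (auto simp: pi1_def inp_def iY1_def iX1_def iX2_def oY1_def oX1_def oX2_def oGv1_def)
    done
  also have "\<dots> = (\<Sum>k\<in>KQ. Pk pd pc k * (if fst (snd k) \<and> snd (snd k) then 1 - uu (dA d1 d2 (fst k)) - uu (dB d1 d2 (fst k)) + KD (dA d1 d2 (fst k)) (dB d1 d2 (fst k)) else if fst (snd k) then 1 - uu (dA d1 d2 (fst k)) else if snd (snd k) then 1 - uu (dB d1 d2 (fst k)) else 0))"
  proof (rule sum.cong[OF refl])
    fix k assume "k \<in> KQ"
    have "cmi (B2 \<times> B2) (PIn (dA d1 d2 (fst k)) (dB d1 d2 (fst k))) (\<lambda>x. fst x) (\<lambda>x. iY1 (snd k) x) (\<lambda>x. k) = (if fst (snd k) \<and> snd (snd k) then 1 - uu (dA d1 d2 (fst k)) - uu (dB d1 d2 (fst k)) + KD (dA d1 d2 (fst k)) (dB d1 d2 (fst k)) else if fst (snd k) then 1 - uu (dA d1 d2 (fst k)) else if snd (snd k) then 1 - uu (dB d1 d2 (fst k)) else 0)"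
      by (rule In_S1) (rule dAB_range[OF d])+
    then show "Pk pd pc k * cmi (B2 \<times> B2) (PIn (dA d1 d2 (fst k)) (dB d1 d2 (fst k))) (\<lambda>x. fst x) (\<lambda>x. iY1 (snd k) x) (\<lambda>x. k) = Pk pd pc k * (if fst (snd k) \<and> snd (snd k) then 1 - uu (dA d1 d2 (fst k)) - uu (dB d1 d2 (fst k)) + KD (dA d1 d2 (fst k)) (dB d1 d2 (fst k)) else if fst (snd k) then 1 - uu (dA d1 d2 (fst k)) else if snd (snd k) then 1 - uu (dB d1 d2 (fst k)) else 0)"
      by simp
  qed
  also have "\<dots> = (pd + pc - pd * pc) - (pd + pc) * UU d1 d2 + pd * pc * KD d1 d2"
    unfolding sum_KQ by (simp add: Pk_def dA_def dB_def bern_def UU_def KD_sym[of d2 d1] field_simps)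
  finally show ?thesis .
qed

lemma Om_S2:
  assumes d: "0 \<le> d1" "d1 \<le> 1" "0 \<le> d2" "d2 \<le> 1"
  shows "cmi Omega (joint pd pc d1 d2) (\<lambda>w. (oX1c w, oX2c w)) oY2 (\<lambda>w. (oQ w, oGv2 w)) = (pd + pc - pd * pc) - (pd + pc) * UU d1 d2 + pd * pc * KD d1 d2"
proof -
  have "cmi Omega (joint pd pc d1 d2) (\<lambda>w. (oX1c w, oX2c w)) oY2 (\<lambda>w. (oQ w, oGv2 w)) =
     (\<Sum>k\<in>KQ. Pk pd pc k * cmi (B2 \<times> B2) (PIn (dA d1 d2 (fst k)) (dB d1 d2 (fst k))) (\<lambda>x. fst x) (\<lambda>x. iY2 (snd k) x) (\<lambda>x. k))"
    apply (rule trans[OF Omega_cmi[where pj=pi2 and AN="\<lambda>(k,x). fst x" and BN="\<lambda>(k,x). iY2 (snd k) x"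
        and CN="\<lambda>(k,x). k"]])
    apply (auto simp: pi2_def inp_def iY2_def iX1_def iX2_def oY2_def oX1_def oX2_def oGv2_def)
    done
  also have "\<dots> = (\<Sum>k\<in>KQ. Pk pd pc k * (if fst (snd k) \<and> snd (snd k) then 1 - uu (dA d1 d2 (fst k)) - uu (dB d1 d2 (fst k)) + KD (dA d1 d2 (fst k)) (dB d1 d2 (fst k)) else if fst (snd k) then 1 - uu (dB d1 d2 (fst k)) else if snd (snd k) then 1 - uu (dA d1 d2 (fst k)) else 0))"
  proof (rule sum.cong[OF refl])
    fix k assume "k \<in> KQ"
    have "cmi (B2 \<times> B2) (PIn (dA d1 d2 (fst k)) (dB d1 d2 (fst k))) (\<lambda>x. fst x) (\<lambda>x. iY2 (snd k) x) (\<lambda>x. k) = (if fst (snd k) \<and> snd (snd k) then 1 - uu (dA d1 d2 (fst k)) - uu (dB d1 d2 (fst k)) + KD (dA d1 d2 (fst k)) (dB d1 d2 (fst k)) else if fst (snd k) then 1 - uu (dB d1 d2 (fst k)) else if snd (snd k) then 1 - uu (dA d1 d2 (fst k)) else 0)"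
      by (rule In_S2) (rule dAB_range[OF d])+
    then show "Pk pd pc k * cmi (B2 \<times> B2) (PIn (dA d1 d2 (fst k)) (dB d1 d2 (fst k))) (\<lambda>x. fst x) (\<lambda>x. iY2 (snd k) x) (\<lambda>x. k) = Pk pd pc k * (if fst (snd k) \<and> snd (snd k) then 1 - uu (dA d1 d2 (fst k)) - uu (dB d1 d2 (fst k)) + KD (dA d1 d2 (fst k)) (dB d1 d2 (fst k)) else if fst (snd k) then 1 - uu (dB d1 d2 (fst k)) else if snd (snd k) then 1 - uu (dA d1 d2 (fst k)) else 0)"
      by simp
  qed
  also have "\<dots> = (pd + pc - pd * pc) - (pd + pc) * UU d1 d2 + pd * pc * KD d1 d2"
    unfolding sum_KQ by (simp add: Pk_def dA_def dB_def bern_def UU_def KD_sym[of d2 d1] field_simps)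
  finally show ?thesis .
qed

lemma Om_a1:
  assumes d: "0 \<le> d1" "d1 \<le> 1" "0 \<le> d2" "d2 \<le> 1"
  shows "cmi Omega (joint pd pc d1 d2) oX1c oY1 (\<lambda>w. (oX2c w, oQ w, oGv1 w)) = pd * (1 - UU d1 d2) - pd * pc * UU d1 d2 + pd * pc * KD d1 d2"
proof -
  have "cmi Omega (joint pd pc d1 d2) oX1c oY1 (\<lambda>w. (oX2c w, oQ w, oGv1 w)) =
     (\<Sum>k\<in>KQ. Pk pd pc k * cmi (B2 \<times> B2) (PIn (dA d1 d2 (fst k)) (dB d1 d2 (fst k))) (\<lambda>x. fst (fst x)) (\<lambda>x. iY1 (snd k) x) (\<lambda>x. (snd (fst x), fst k, snd k)))"
    apply (rule trans[OF Omega_cmi[where pj=pi1 and AN="\<lambda>(k,x). fst (fst x)" and BN="\<lambda>(k,x). iY1 (snd k) x"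
        and CN="\<lambda>(k,x). (snd (fst x), fst k, snd k)"]])
    apply (auto simp: pi1_def inp_def iY1_def iX1_def iX2_def oY1_def oX1_def oX2_def oGv1_def)
    done
  also have "\<dots> = (\<Sum>k\<in>KQ. Pk pd pc k * (if fst (snd k) \<and> snd (snd k) then 1 - uu (dA d1 d2 (fst k)) - uu (dB d1 d2 (fst k)) + KD (dA d1 d2 (fst k)) (dB d1 d2 (fst k)) else if fst (snd k) then 1 - uu (dA d1 d2 (fst k)) else 0))"
  proof (rule sum.cong[OF refl])
    fix k assume "k \<in> KQ"
    have "cmi (B2 \<times> B2) (PIn (dA d1 d2 (fst k)) (dB d1 d2 (fst k))) (\<lambda>x. fst (fst x)) (\<lambda>x. iY1 (snd k) x) (\<lambda>x. (snd (fst x), fst k, snd k))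
      = cmi (B2 \<times> B2) (PIn (dA d1 d2 (fst k)) (dB d1 d2 (fst k))) (\<lambda>x. fst (fst x)) (iY1 (snd k)) (\<lambda>x. snd (fst x))"
      by (rule cmi_C_cong) auto
    also have "\<dots> = (if fst (snd k) \<and> snd (snd k) then 1 - uu (dA d1 d2 (fst k)) - uu (dB d1 d2 (fst k)) + KD (dA d1 d2 (fst k)) (dB d1 d2 (fst k)) else if fst (snd k) then 1 - uu (dA d1 d2 (fst k)) else 0)"
      by (rule In_a1) (rule dAB_range[OF d])+
    finally show "Pk pd pc k * cmi (B2 \<times> B2) (PIn (dA d1 d2 (fst k)) (dB d1 d2 (fst k))) (\<lambda>x. fst (fst x)) (\<lambda>x. iY1 (snd k) x) (\<lambda>x. (snd (fst x), fst k, snd k)) = Pk pd pc k * (if fst (snd k) \<and> snd (snd k) then 1 - uu (dA d1 d2 (fst k)) - uu (dB d1 d2 (fst k)) + KD (dA d1 d2 (fst k)) (dB d1 d2 (fst k)) else if fst (snd k) then 1 - uu (dA d1 d2 (fst k)) else 0)"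
      by simp
  qed
  also have "\<dots> = pd * (1 - UU d1 d2) - pd * pc * UU d1 d2 + pd * pc * KD d1 d2"
    unfolding sum_KQ by (simp add: Pk_def dA_def dB_def bern_def UU_def KD_sym[of d2 d1] field_simps)
  finally show ?thesis .
qed

lemma Om_b1:
  assumes d: "0 \<le> d1" "d1 \<le> 1" "0 \<le> d2" "d2 \<le> 1"
  shows "cmi Omega (joint pd pc d1 d2) oX2c oY1 (\<lambda>w. (oX1c w, oQ w, oGv1 w)) = pc * (1 - UU d1 d2) - pd * pc * UU d1 d2 + pd * pc * KD d1 d2"
proof -
  have "cmi Omega (joint pd pc d1 d2) oX2c oY1 (\<lambda>w. (oX1c w, oQ w, oGv1 w)) =
     (\<Sum>k\<in>KQ. Pk pd pc k * cmi (B2 \<times> B2) (PIn (dA d1 d2 (fst k)) (dB d1 d2 (fst k))) (\<lambda>x. snd (fst x)) (\<lambda>x. iY1 (snd k) x) (\<lambda>x. (fst (fst x), fst k, snd k)))"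
    apply (rule trans[OF Omega_cmi[where pj=pi1 and AN="\<lambda>(k,x). snd (fst x)" and BN="\<lambda>(k,x). iY1 (snd k) x"
        and CN="\<lambda>(k,x). (fst (fst x), fst k, snd k)"]])
    apply (auto simp: pi1_def inp_def iY1_def iX1_def iX2_def oY1_def oX1_def oX2_def oGv1_def)
    done
  also have "\<dots> = (\<Sum>k\<in>KQ. Pk pd pc k * (if fst (snd k) \<and> snd (snd k) then 1 - uu (dA d1 d2 (fst k)) - uu (dB d1 d2 (fst k)) + KD (dA d1 d2 (fst k)) (dB d1 d2 (fst k)) else if snd (snd k) then 1 - uu (dB d1 d2 (fst k)) else 0))"
  proof (rule sum.cong[OF refl])
    fix k assume "k \<in> KQ"
    have "cmi (B2 \<times> B2) (PIn (dA d1 d2 (fst k)) (dB d1 d2 (fst k))) (\<lambda>x. snd (fst x)) (\<lambda>x. iY1 (snd k) x) (\<lambda>x. (fst (fst x), fst k, snd k))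
      = cmi (B2 \<times> B2) (PIn (dA d1 d2 (fst k)) (dB d1 d2 (fst k))) (\<lambda>x. snd (fst x)) (iY1 (snd k)) (\<lambda>x. fst (fst x))"
      by (rule cmi_C_cong) auto
    also have "\<dots> = (if fst (snd k) \<and> snd (snd k) then 1 - uu (dA d1 d2 (fst k)) - uu (dB d1 d2 (fst k)) + KD (dA d1 d2 (fst k)) (dB d1 d2 (fst k)) else if snd (snd k) then 1 - uu (dB d1 d2 (fst k)) else 0)"
      by (rule In_b1) (rule dAB_range[OF d])+
    finally show "Pk pd pc k * cmi (B2 \<times> B2) (PIn (dA d1 d2 (fst k)) (dB d1 d2 (fst k))) (\<lambda>x. snd (fst x)) (\<lambda>x. iY1 (snd k) x) (\<lambda>x. (fst (fst x), fst k, snd k)) = Pk pd pc k * (if fst (snd k) \<and> snd (snd k) then 1 - uu (dA d1 d2 (fst k)) - uu (dB d1 d2 (fst k)) + KD (dA d1 d2 (fst k)) (dB d1 d2 (fst k)) else if snd (snd k) then 1 - uu (dB d1 d2 (fst k)) else 0)"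
      by simp
  qed
  also have "\<dots> = pc * (1 - UU d1 d2) - pd * pc * UU d1 d2 + pd * pc * KD d1 d2"
    unfolding sum_KQ by (simp add: Pk_def dA_def dB_def bern_def UU_def KD_sym[of d2 d1] field_simps)
  finally show ?thesis .
qed

lemma Om_a2:
  assumes d: "0 \<le> d1" "d1 \<le> 1" "0 \<le> d2" "d2 \<le> 1"
  shows "cmi Omega (joint pd pc d1 d2) oX1c oY2 (\<lambda>w. (oX2c w, oQ w, oGv2 w)) = pc * (1 - UU d1 d2) - pd * pc * UU d1 d2 + pd * pc * KD d1 d2"
proof -
  have "cmi Omega (joint pd pc d1 d2) oX1c oY2 (\<lambda>w. (oX2c w, oQ w, oGv2 w)) =
     (\<Sum>k\<in>KQ. Pk pd pc k * cmi (B2 \<times> B2) (PIn (dA d1 d2 (fst k)) (dB d1 d2 (fst k))) (\<lambda>x. fst (fst x)) (\<lambda>x. iY2 (snd k) x) (\<lambda>x. (snd (fst x), fst k, snd k)))"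
    apply (rule trans[OF Omega_cmi[where pj=pi2 and AN="\<lambda>(k,x). fst (fst x)" and BN="\<lambda>(k,x). iY2 (snd k) x"
        and CN="\<lambda>(k,x). (snd (fst x), fst k, snd k)"]])
    apply (auto simp: pi2_def inp_def iY2_def iX1_def iX2_def oY2_def oX1_def oX2_def oGv2_def)
    done
  also have "\<dots> = (\<Sum>k\<in>KQ. Pk pd pc k * (if fst (snd k) \<and> snd (snd k) then 1 - uu (dA d1 d2 (fst k)) - uu (dB d1 d2 (fst k)) + KD (dA d1 d2 (fst k)) (dB d1 d2 (fst k)) else if snd (snd k) then 1 - uu (dA d1 d2 (fst k)) else 0))"
  proof (rule sum.cong[OF refl])
    fix k assume "k \<in> KQ"
    have "cmi (B2 \<times> B2) (PIn (dA d1 d2 (fst k)) (dB d1 d2 (fst k))) (\<lambda>x. fst (fst x)) (\<lambda>x. iY2 (snd k) x) (\<lambda>x. (snd (fst x), fst k, snd k))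
      = cmi (B2 \<times> B2) (PIn (dA d1 d2 (fst k)) (dB d1 d2 (fst k))) (\<lambda>x. fst (fst x)) (iY2 (snd k)) (\<lambda>x. snd (fst x))"
      by (rule cmi_C_cong) auto
    also have "\<dots> = (if fst (snd k) \<and> snd (snd k) then 1 - uu (dA d1 d2 (fst k)) - uu (dB d1 d2 (fst k)) + KD (dA d1 d2 (fst k)) (dB d1 d2 (fst k)) else if snd (snd k) then 1 - uu (dA d1 d2 (fst k)) else 0)"
      by (rule In_a2) (rule dAB_range[OF d])+
    finally show "Pk pd pc k * cmi (B2 \<times> B2) (PIn (dA d1 d2 (fst k)) (dB d1 d2 (fst k))) (\<lambda>x. fst (fst x)) (\<lambda>x. iY2 (snd k) x) (\<lambda>x. (snd (fst x), fst k, snd k)) = Pk pd pc k * (if fst (snd k) \<and> snd (snd k) then 1 - uu (dA d1 d2 (fst k)) - uu (dB d1 d2 (fst k)) + KD (dA d1 d2 (fst k)) (dB d1 d2 (fst k)) else if snd (snd k) then 1 - uu (dA d1 d2 (fst k)) else 0)"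
      by simp
  qed
  also have "\<dots> = pc * (1 - UU d1 d2) - pd * pc * UU d1 d2 + pd * pc * KD d1 d2"
    unfolding sum_KQ by (simp add: Pk_def dA_def dB_def bern_def UU_def KD_sym[of d2 d1] field_simps)
  finally show ?thesis .
qed

lemma Om_b2:
  assumes d: "0 \<le> d1" "d1 \<le> 1" "0 \<le> d2" "d2 \<le> 1"
  shows "cmi Omega (joint pd pc d1 d2) oX2c oY2 (\<lambda>w. (oX1c w, oQ w, oGv2 w)) = pd * (1 - UU d1 d2) - pd * pc * UU d1 d2 + pd * pc * KD d1 d2"
proof -
  have "cmi Omega (joint pd pc d1 d2) oX2c oY2 (\<lambda>w. (oX1c w, oQ w, oGv2 w)) =
     (\<Sum>k\<in>KQ. Pk pd pc k * cmi (B2 \<times> B2) (PIn (dA d1 d2 (fst k)) (dB d1 d2 (fst k))) (\<lambda>x. snd (fst x)) (\<lambda>x. iY2 (snd k) x) (\<lambda>x. (fst (fst x), fst k, snd k)))"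
    apply (rule trans[OF Omega_cmi[where pj=pi2 and AN="\<lambda>(k,x). snd (fst x)" and BN="\<lambda>(k,x). iY2 (snd k) x"
        and CN="\<lambda>(k,x). (fst (fst x), fst k, snd k)"]])
    apply (auto simp: pi2_def inp_def iY2_def iX1_def iX2_def oY2_def oX1_def oX2_def oGv2_def)
    done
  also have "\<dots> = (\<Sum>k\<in>KQ. Pk pd pc k * (if fst (snd k) \<and> snd (snd k) then 1 - uu (dA d1 d2 (fst k)) - uu (dB d1 d2 (fst k)) + KD (dA d1 d2 (fst k)) (dB d1 d2 (fst k)) else if fst (snd k) then 1 - uu (dB d1 d2 (fst k)) else 0))"
  proof (rule sum.cong[OF refl])
    fix k assume "k \<in> KQ"
    have "cmi (B2 \<times> B2) (PIn (dA d1 d2 (fst k)) (dB d1 d2 (fst k))) (\<lambda>x. snd (fst x)) (\<lambda>x. iY2 (snd k) x) (\<lambda>x. (fst (fst x), fst k, snd k))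
      = cmi (B2 \<times> B2) (PIn (dA d1 d2 (fst k)) (dB d1 d2 (fst k))) (\<lambda>x. snd (fst x)) (iY2 (snd k)) (\<lambda>x. fst (fst x))"
      by (rule cmi_C_cong) auto
    also have "\<dots> = (if fst (snd k) \<and> snd (snd k) then 1 - uu (dA d1 d2 (fst k)) - uu (dB d1 d2 (fst k)) + KD (dA d1 d2 (fst k)) (dB d1 d2 (fst k)) else if fst (snd k) then 1 - uu (dB d1 d2 (fst k)) else 0)"
      by (rule In_b2) (rule dAB_range[OF d])+
    finally show "Pk pd pc k * cmi (B2 \<times> B2) (PIn (dA d1 d2 (fst k)) (dB d1 d2 (fst k))) (\<lambda>x. snd (fst x)) (\<lambda>x. iY2 (snd k) x) (\<lambda>x. (fst (fst x), fst k, snd k)) = Pk pd pc k * (if fst (snd k) \<and> snd (snd k) then 1 - uu (dA d1 d2 (fst k)) - uu (dB d1 d2 (fst k)) + KD (dA d1 d2 (fst k)) (dB d1 d2 (fst k)) else if fst (snd k) then 1 - uu (dB d1 d2 (fst k)) else 0)"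
      by simp
  qed
  also have "\<dots> = pd * (1 - UU d1 d2) - pd * pc * UU d1 d2 + pd * pc * KD d1 d2"
    unfolding sum_KQ by (simp add: Pk_def dA_def dB_def bern_def UU_def KD_sym[of d2 d1] field_simps)
  finally show ?thesis .
qed

lemma xlx_lim: "(xlx \<longlongrightarrow> 0) (at_right 0)"
proof -
  have "((\<lambda>t::real. t * ln t / ln 2) \<longlongrightarrow> 0) (at_right 0)" by real_asymp
  moreover have "xlx = (\<lambda>t::real. t * ln t / ln 2)" by (auto simp: fun_eq_iff xlx_def log_def)
  ultimately show ?thesis by simp
qed

lemma xlx_cont: "continuous_on {0..1} xlx"
  unfolding continuous_on_eq_continuous_within
proof
  fix x :: real assume x: "x \<in> {0..1}"
  show "continuous (at x within {0..1}) xlx"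
  proof (cases "x = 0")
    case True
    have "(xlx \<longlongrightarrow> xlx 0) (at 0 within {0..1})"
      using xlx_lim by (simp add: at_within_Icc_at_right)
    then show ?thesis using True by (simp add: continuous_within)
  next
    case False
    with x have "0 < x" by simp
    then have "isCont xlx x" unfolding xlx_def log_def by (intro continuous_intros) auto
    then show ?thesis by (rule continuous_at_imp_continuous_at_within)
  qed
qed

lemma hb_cont: "continuous_on {0..1} hb"
proof -
  have "continuous_on {0..1} (\<lambda>t. xlx (1 - t))"
    by (rule continuous_on_compose2[OF xlx_cont]) (auto intro: continuous_intros)
  then show ?thesis unfolding hb_def[abs_def] using xlx_cont by (intro continuous_intros)
qed

lemma tt_cont: "continuous_on {0..1} tt"
  unfolding tt_def[abs_def] by (intro continuous_intros) auto

lemma uu_cont: "continuous_on {0..1} uu"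
proof -
  have "continuous_on {0..1} (\<lambda>a. hb (tt a))"
    by (rule continuous_on_compose2[OF hb_cont tt_cont]) (auto dest: tt_range)
  then show ?thesis unfolding uu_def[abs_def] by (intro continuous_intros) auto
qed

lemma tt_0: "tt 0 = 1/2" and tt_1: "tt 1 = 0" by (simp_all add: tt_def)
lemma uu_0: "uu 0 = 1" by (simp add: uu_def tt_0 hb_half)
lemma uu_1: "uu 1 = 0" by (simp add: uu_def tt_1)

lemma uu_le_1: assumes "0 \<le> a" "a \<le> 1" shows "uu a \<le> 1"
proof -
  have h: "hb (tt a) \<le> 1" using tt_range[OF assms] by (intro hb_le_1)
  show ?thesis
  proof (cases "0 \<le> hb (tt a)")
    case True
    have "(1 - a/2) * hb (tt a) \<le> 1 * hb (tt a)" using True assms by (intro mult_right_mono) auto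
    then show ?thesis using h by (simp add: uu_def)
  next
    case False
    then have "(1 - a/2) * hb (tt a) \<le> 0" using assms by (intro mult_nonneg_nonpos) auto
    then show ?thesis by (simp add: uu_def)
  qed
qed

lemma KD_nonneg: assumes "0 \<le> a" "a \<le> 1" "0 \<le> b" "b \<le> 1" shows "0 \<le> KD a b"
  unfolding KD_def using hb_conv_le[of "tt a" "tt b"] tt_range[OF assms(1,2)] tt_range[OF assms(3,4)] assms
  by (intro mult_nonneg_nonneg) auto

lemma KD_1: "KD 1 b = 0" by (simp add: KD_def tt_1 conv_def)
lemma KD_00: "KD 0 0 = 1" by (simp add: KD_def tt_0 conv_def hb_half)

lemma HK_char:
  assumes d: "0 \<le> d1" "d1 \<le> 1" "0 \<le> d2" "d2 \<le> 1"
  shows "HK_rates pd pc d1 d2 r1c r1p r2c r2p \<longleftrightarrow>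
    (0 \<le> r1c \<and> 0 \<le> r1p \<and> 0 \<le> r2c \<and> 0 \<le> r2p \<and>
     r1p \<le> pd * UU d1 d2 - pd * pc * KD d1 d2 \<and> r2p \<le> pd * UU d1 d2 - pd * pc * KD d1 d2 \<and>
     r1c + r2c \<le> (pd + pc - pd * pc) - (pd + pc) * UU d1 d2 + pd * pc * KD d1 d2 \<and>
     r1c \<le> pd * (1 - UU d1 d2) - pd * pc * UU d1 d2 + pd * pc * KD d1 d2 \<and>
     r2c \<le> pc * (1 - UU d1 d2) - pd * pc * UU d1 d2 + pd * pc * KD d1 d2 \<and>
     r1c \<le> pc * (1 - UU d1 d2) - pd * pc * UU d1 d2 + pd * pc * KD d1 d2 \<and>
     r2c \<le> pd * (1 - UU d1 d2) - pd * pc * UU d1 d2 + pd * pc * KD d1 d2)"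
  unfolding HK_rates_def Om_A1[OF d] Om_A2[OF d] Om_S1[OF d] Om_S2[OF d] Om_a1[OF d] Om_b1[OF d]
    Om_a2[OF d] Om_b2[OF d] by auto

lemma joint_nonneg:
  assumes "0 \<le> pd" "pd \<le> 1" "0 \<le> pc" "pc \<le> 1" "0 \<le> d1" "d1 \<le> 1" "0 \<le> d2" "d2 \<le> 1"
  shows "0 \<le> joint pd pc d1 d2 w"
proof -
  have r: "\<And>a. 0 \<le> a \<Longrightarrow> a \<le> 1 \<Longrightarrow> 0 \<le> bern (a/2) x \<and> 0 \<le> bern (1 - 1/(2 - a)) x" for x
    using tt_range by (auto simp: bern_def tt_def)
  have b: "0 \<le> bern pd x" "0 \<le> bern pc x" for x using assms by (auto simp: bern_def)
  show ?thesis unfolding joint_def Let_def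
    using r[of d1] r[of d2] b assms by (auto intro!: mult_nonneg_nonneg)
qed

lemma HK_zero:
  assumes "0 \<le> pd" "pd \<le> 1" "0 \<le> pc" "pc \<le> 1" "0 \<le> d1" "d1 \<le> 1" "0 \<le> d2" "d2 \<le> 1"
  shows "HK_rates pd pc d1 d2 0 0 0 0"
proof -
  have nn: "\<forall>w\<in>Omega. 0 \<le> joint pd pc d1 d2 w" using joint_nonneg[OF assms] by blast
  show ?thesis unfolding HK_rates_def by (simp add: cmi_nonneg[OF finOmega nn])
qed

lemma Rsum_le:
  assumes bound: "\<And>r1c r1p r2c r2p. HK_rates pd pc d1 d2 r1c r1p r2c r2p \<Longrightarrow> r1c + r1p + r2c + r2p \<le> V"
    and z: "HK_rates pd pc d1 d2 0 0 0 0"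
  shows "Rsum pd pc d1 d2 \<le> V"
  unfolding Rsum_def
proof (rule cSup_least)
  show "{r1c + r1p + r2c + r2p |r1c r1p r2c r2p. HK_rates pd pc d1 d2 r1c r1p r2c r2p} \<noteq> {}" using z by blast
qed (use bound in blast)

lemma Rsum_eq:
  assumes bound: "\<And>r1c r1p r2c r2p. HK_rates pd pc d1 d2 r1c r1p r2c r2p \<Longrightarrow> r1c + r1p + r2c + r2p \<le> V"
    and h: "HK_rates pd pc d1 d2 r1c r1p r2c r2p" and s: "r1c + r1p + r2c + r2p = V"
  shows "Rsum pd pc d1 d2 = V"
  unfolding Rsum_def
  by (rule cSup_eq_maximum) (use h s bound in blast)+

lemma Cstar_eq:
  assumes "0 < 2 * pd * pc - (pd - pc)"
  shows "Cstar pd pc = 2 * ((pd * pc - (pd - pc)) / (2 * pd * pc - (pd - pc)))"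
  using assms unfolding Cstar_def by (simp add: field_simps)

lemma arith_upper:
  fixes pd pc U E x :: real
  assumes p: "0 \<le> pc" "pc \<le> pd" "pd \<le> 1" and U: "U \<le> 1" and E: "0 \<le> E"
    and x1: "x \<le> 2 * (pd * U - E) + ((pd + pc - pd * pc) - (pd + pc) * U + E)"
    and x2: "x \<le> 2 * (pd * U - E) + 2 * (pc * (1 - U) - pd * pc * U + E)"
  shows "x \<le> (if pc \<le> pd / (1 + pd) then 2 * pd * (1 - pc) else pd + pc - pd * pc + (pd - pc) / 2 * Cstar pd pc)"
proof -
  define c0 where "c0 = pd - pc - pd * pc"
  have x2': "x \<le> 2 * pc + 2 * c0 * U" using x2 unfolding c0_def by (simp add: algebra_simps)
  have x1': "x \<le> (pd + pc - pd * pc) + (pd - pc) * U" using x1 E by (simp add: algebra_simps)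
  show ?thesis
  proof (cases "pc \<le> pd / (1 + pd)")
    case True
    then have "pc * (1 + pd) \<le> pd" using p by (simp add: le_divide_eq)
    then have c0: "0 \<le> c0" unfolding c0_def by (simp add: algebra_simps)
    have "c0 * U \<le> c0 * 1" using c0 U by (intro mult_left_mono)
    then have "x \<le> 2 * pd * (1 - pc)" using x2' unfolding c0_def by (simp add: algebra_simps)
    then show ?thesis using True by simp
  next
    case False
    then have "pd < pc * (1 + pd)" using p by (simp add: not_le divide_less_eq)
    then have c0: "c0 < 0" unfolding c0_def by (simp add: algebra_simps)
    define D where "D = 2 * pd * pc - (pd - pc)"
    have pp: "0 \<le> pd * pc" using p by simp
    have "pd < pc + pd * pc" using \<open>pd < pc * (1 + pd)\<close> by (simp add: algebra_simps)
    then have D: "0 < D" unfolding D_def using pp by linarith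
    define Us where "Us = (pd * pc - (pd - pc)) / D"
    have Cs: "Cstar pd pc = 2 * Us" unfolding Us_def D_def using Cstar_eq D unfolding D_def by simp
    have V: "pd + pc - pd * pc + (pd - pc) / 2 * Cstar pd pc = (pd + pc - pd * pc) + (pd - pc) * Us"
      unfolding Cs by simp
    have idt: "2 * pc + 2 * c0 * Us = (pd + pc - pd * pc) + (pd - pc) * Us"
    proof -
      have "D * Us = pd * pc - (pd - pc)" unfolding Us_def using D by simp
      then show ?thesis unfolding c0_def D_def by (simp add: algebra_simps)
    qed
    show ?thesis
    proof (cases "U \<le> Us")
      case True
      have "(pd - pc) * U \<le> (pd - pc) * Us" using True p by (intro mult_left_mono) auto
      then show ?thesis using x1' unfolding if_not_P[OF False] V by linarith
    next
      case False2: False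
      have "c0 * U \<le> c0 * Us" using False2 c0 by (intro mult_left_mono_neg) auto
      then show ?thesis using x2' idt unfolding if_not_P[OF False] V by linarith
    qed
  qed
qed

lemma UU_le_1: assumes "0 \<le> d1" "d1 \<le> 1" "0 \<le> d2" "d2 \<le> 1" shows "UU d1 d2 \<le> 1"
  using uu_le_1[of d1] uu_le_1[of d2] assms unfolding UU_def by simp

theorem theorem3:
  fixes pd pc :: real
  assumes "0 \<le> pc" and "pc \<le> pd" and "pd \<le> 1"
  defines "V \<equiv> (if pc \<le> pd / (1 + pd) then 2 * pd * (1 - pc)
                 else pd + pc - pd * pc + (pd - pc) / 2 * Cstar pd pc)"
  shows "(\<exists>d1\<in>{0..1}. \<exists>d2\<in>{0..1}. Rsum pd pc d1 d2 = V)
       \<and> (\<forall>d1\<in>{0..1}. \<forall>d2\<in>{0..1}. Rsum pd pc d1 d2 \<le> V)"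
proof -
  have p: "0 \<le> pc" "pc \<le> pd" "pd \<le> 1" by fact+
  have pd0: "0 \<le> pd" and pc1: "pc \<le> 1" using p by linarith+
  have bound: "r1c + r1p + r2c + r2p \<le> V"
    if d: "0 \<le> d1" "d1 \<le> 1" "0 \<le> d2" "d2 \<le> 1" and h: "HK_rates pd pc d1 d2 r1c r1p r2c r2p"
    for d1 d2 r1c r1p r2c r2p
  proof -
    note hh = h[unfolded HK_char[OF d]]
    let ?U = "UU d1 d2" and ?E = "pd * pc * KD d1 d2"
    have U: "?U \<le> 1" by (rule UU_le_1[OF d])
    have E: "0 \<le> ?E" using KD_nonneg[OF d] p pd0 by simp
    have x1: "r1c + r1p + r2c + r2p \<le> 2 * (pd * ?U - ?E) + ((pd + pc - pd * pc) - (pd + pc) * ?U + ?E)"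
      using hh by (elim conjE) (unfold ring_distribs mult_1_right, linarith)
    have x2: "r1c + r1p + r2c + r2p \<le> 2 * (pd * ?U - ?E) + 2 * (pc * (1 - ?U) - pd * pc * ?U + ?E)"
      using hh by (elim conjE) (unfold ring_distribs mult_1_right, linarith)
    show ?thesis unfolding V_def by (rule arith_upper[OF p U E x1 x2])
  qed
  have part2: "\<forall>d1\<in>{0..1}. \<forall>d2\<in>{0..1}. Rsum pd pc d1 d2 \<le> V"
  proof (intro ballI)
    fix d1 d2 :: real assume "d1 \<in> {0..1}" "d2 \<in> {0..1}"
    then have d: "0 \<le> d1" "d1 \<le> 1" "0 \<le> d2" "d2 \<le> 1" by auto
    show "Rsum pd pc d1 d2 \<le> V"
      by (rule Rsum_le[OF bound[OF d] HK_zero[OF pd0 p(3) p(1) pc1 d]])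
  qed
  have part1: "\<exists>d1\<in>{0..1}. \<exists>d2\<in>{0..1}. Rsum pd pc d1 d2 = V"
  proof (cases "pc \<le> pd / (1 + pd)")
    case True
    have V: "V = 2 * pd * (1 - pc)" unfolding V_def using True by simp
    have d: "(0::real) \<le> 0" "(0::real) \<le> 1" "(0::real) \<le> 0" "(0::real) \<le> 1" by auto
    have U: "UU 0 0 = 1" by (simp add: UU_def uu_0)
    have pp: "0 \<le> pd * pc" "pd * pc \<le> pd" using p pd0 pc1 by (auto intro: mult_left_le)
    have hk: "HK_rates pd pc 0 0 0 (pd - pd * pc) 0 (pd - pd * pc)"
      unfolding HK_char[OF d] U KD_00 using pp by (simp add: algebra_simps)
    have s: "0 + (pd - pd * pc) + 0 + (pd - pd * pc) = V" by (simp add: V algebra_simps)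
    have "Rsum pd pc 0 0 = V"
      by (rule Rsum_eq[OF bound[OF d] hk s])
    then show ?thesis by force
  next
    case False
    then have "pd < pc * (1 + pd)" using p by (simp add: not_le divide_less_eq)
    then have num: "0 < pd * pc - (pd - pc)" by (simp add: algebra_simps)
    have pp: "0 \<le> pd * pc" using p pd0 by simp
    define D where "D = 2 * pd * pc - (pd - pc)"
    have D: "0 < D" unfolding D_def using num pp by linarith
    define Us where "Us = (pd * pc - (pd - pc)) / D"
    have Us0: "0 \<le> Us" unfolding Us_def using num D by simp
    have Us2: "Us \<le> 1/2" unfolding Us_def using D p by (simp add: divide_le_eq D_def algebra_simps)
    have DUs: "D * Us = pd * pc - (pd - pc)" unfolding Us_def using D by simp
    have Cs: "Cstar pd pc = 2 * Us" unfolding Us_def D_def using Cstar_eq D unfolding D_def by simp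
    have V: "V = (pd + pc - pd * pc) + (pd - pc) * Us" unfolding V_def Cs using False by simp
    obtain t where t: "0 \<le> t" "t \<le> 1" "uu t = 2 * Us"
      using IVT2'[of uu 1 "2 * Us" 0] uu_cont uu_0 uu_1 Us0 Us2 by auto
    have d: "(0::real) \<le> 1" "(1::real) \<le> 1" "0 \<le> t" "t \<le> 1" using t by auto
    have U: "UU 1 t = Us" by (simp add: UU_def uu_1 t)
    define r where "r = pc * (1 - Us) - pd * pc * Us"
    have r0: "0 \<le> r"
    proof -
      have "(1 + pd) * Us \<le> 2 * (1/2)" using Us0 Us2 p pd0 by (intro mult_mono) auto
      then have "0 \<le> pc * (1 - (1 + pd) * Us)" using p by simp
      then show ?thesis unfolding r_def by (simp add: algebra_simps)
    qed
    have key: "2 * r = (pd + pc - pd * pc) - (pd + pc) * Us"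
      using DUs unfolding r_def D_def by (simp add: algebra_simps)
    have rle: "r \<le> pd * (1 - Us) - pd * pc * Us"
    proof -
      have "pc * (1 - Us) \<le> pd * (1 - Us)" using p Us2 by (intro mult_right_mono) auto
      then show ?thesis unfolding r_def by simp
    qed
    have pU: "0 \<le> pd * Us" using pd0 Us0 by simp
    have hk: "HK_rates pd pc 1 t r (pd * Us) r (pd * Us)"
      unfolding HK_char[OF d] U KD_1 using r0 rle key pU by (simp add: r_def[symmetric])
    have s: "r + pd * Us + r + pd * Us = V" using key unfolding V by (simp add: algebra_simps)
    have "Rsum pd pc 1 t = V"
      by (rule Rsum_eq[OF bound[OF d] hk s])
    then show ?thesis using t by force
  qed
  show ?thesis using part1 part2 by blast
qed

end
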